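(* Let $(M,\varphi,g)$ be an anti-paraKähler manifold of dimension $2k\ge 2$, and let $g_{BS}$ be the Berger type deformed Sasaki metric on $TM$ with constant $\delta\neq0$, and $g_S$ the Sasaki metric on $TM$. Then the identity map $I:(TM,g_{BS})\to(TM,g_S)$ is not totally geodesic, and it is not harmonic (i.e. $g_S$ is not harmonic with respect to $g_{BS}$: its tension field $\tau_{g_{BS}}(I)=\mathrm{trace}_{g_{BS}}\big({}^{S}\nabla-{}^{BS}\nabla\big)$ does not vanish identically).
   Context: An anti-paraKähler manifold $(M,\varphi,g)$ of dimension $2k$ consists of a Riemannian metric $g$ and a $(1,1)$-tensor field $\varphi$ with $\varphi^2=\mathrm{id}$ whose $(+1)$- and $(-1)$-eigenbundles both have rank $k$, such that $g(\varphi X,Y)=g(X,\varphi Y)$ for all vector fields $X,Y$ and $\nabla\varphi=0$, where $\nabla$ is the Levi-Civita connection of $g$. Let $\pi:TM\to M$ be the tangent bundle; points of $TM$ are denoted $u$. For a vector field $X$ on $M$, $X^H$ denotes its horizontal lift to $TM$ with respect to $\nabla$ and $X^V$ its vertical lift. For a constant $\delta$, the Berger type deformed Sasaki metric $g_{BS}$ on $TM$ is the Riemannian metric defined at $u\in TM$ by $g_{BS}(X^H,Y^H)=g(X,Y)$, $g_{BS}(X^H,Y^V)=g_{BS}(X^V,Y^H)=0$, $g_{BS}(X^V,Y^V)=g(X,Y)+\delta^2 g(X,\varphi u)\,g(Y,\varphi u)$ (all evaluated at $\pi(u)$). The Sasaki metric $g_S$ is the same expression with $\delta=0$. ${}^{BS}\nabla$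 and ${}^{S}\nabla$ denote the Levi-Civita connections of $g_{BS}$ and $g_S$. For the identity map $I:(TM,g_{BS})\to(TM,g_S)$ the second fundamental form is $\beta(I)={}^{S}\nabla-{}^{BS}\nabla$; $I$ is totally geodesic if $\beta(I)=0$ and harmonic if $\mathrm{trace}_{g_{BS}}\beta(I)=0$. *)

theory Defs
  imports "HOL-Analysis.Analysis"
begin

text \<open>Everything is done in a coordinate chart: the manifold M is (a chart domain) U, an open
subset of real^'n; the tangent bundle TM over U has coordinates (x,u) encoded as a vector
z in real^('n + 'n), with x = z restricted to Inl, u = z restricted to Inr.\<close>

definition pd :: "(real^'m \<Rightarrow> real) \<Rightarrow> 'm \<Rightarrow> real^'m \<Rightarrow> real" where
  "pd f i z = deriv (\<lambda>t. f (z + t *\<^sub>R axis i 1)) 0"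

fun ipd :: "(real^'m \<Rightarrow> real) \<Rightarrow> 'm list \<Rightarrow> real^'m \<Rightarrow> real" where
  "ipd f [] = f"
| "ipd f (i # is) = pd (ipd f is) i"

definition smooth_on :: "(real^'m) set \<Rightarrow> (real^'m \<Rightarrow> real) \<Rightarrow> bool" where
  "smooth_on U f \<longleftrightarrow> (\<forall>is. continuous_on U (ipd f is) \<and>
      (\<forall>z\<in>U. \<forall>i. (\<lambda>t. ipd f is (z + t *\<^sub>R axis i 1)) differentiable (at 0)))"

definition christoffel :: "(real^'m \<Rightarrow> real^'m^'m) \<Rightarrow> real^'m \<Rightarrow> 'm \<Rightarrow> 'm \<Rightarrow> 'm \<Rightarrow> real" where
  "christoffel G z c a b = (1/2) * (\<Sum>l\<in>UNIV. matrix_inv (G z) $ c $ l *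
      (pd (\<lambda>w. G w $ b $ l) a z + pd (\<lambda>w. G w $ a $ l) b z - pd (\<lambda>w. G w $ a $ b) l z))"

definition gform :: "(real^'n \<Rightarrow> real^'n^'n) \<Rightarrow> real^'n \<Rightarrow> real^'n \<Rightarrow> real^'n \<Rightarrow> real" where
  "gform g x v w = v \<bullet> (g x *v w)"

text \<open>Components (nabla_{d_a} phi)^i_j of the covariant derivative of the (1,1)-tensor phi,
where phi x $ i $ j = phi^i_j.\<close>
definition nabla_phi :: "(real^'n \<Rightarrow> real^'n^'n) \<Rightarrow> (real^'n \<Rightarrow> real^'n^'n) \<Rightarrow> real^'n
    \<Rightarrow> 'n \<Rightarrow> 'n \<Rightarrow> 'n \<Rightarrow> real" where
  "nabla_phi g \<phi> x a i j = pd (\<lambda>y. \<phi> y $ i $ j) a x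
     + (\<Sum>l\<in>UNIV. christoffel g x i a l * \<phi> x $ l $ j)
     - (\<Sum>l\<in>UNIV. christoffel g x l a j * \<phi> x $ i $ l)"

definition xpart :: "real^('n + 'n) \<Rightarrow> real^'n" where
  "xpart z = (\<chi> i. z $ Inl i)"

definition upart :: "real^('n + 'n) \<Rightarrow> real^'n" where
  "upart z = (\<chi> i. z $ Inr i)"

definition TM_dom :: "(real^'n) set \<Rightarrow> (real^('n + 'n)) set" where
  "TM_dom U = {z. xpart z \<in> U}"

text \<open>Coordinate matrix of the Berger type deformed Sasaki metric g_BS at z = (x,u), in the
coordinate frame (d_{x^i}, d_{u^i}). With horizontal lifts H_i = d_{x^i} - N_i^k d_{u^k},
N_i^k = u^j Gamma^k_{ij}, and vertical lifts V_i = d_{u^i}, the defining conditions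
g_BS(H_i,H_j) = g_ij, g_BS(H_i,V_j) = 0, g_BS(V_i,V_j) = h_ij with
h_ij = g_ij + delta^2 g(d_i, phi u) g(d_j, phi u) are equivalent to the formula below.\<close>
definition berger_metric :: "(real^'n \<Rightarrow> real^'n^'n) \<Rightarrow> (real^'n \<Rightarrow> real^'n^'n) \<Rightarrow> real
    \<Rightarrow> real^('n + 'n) \<Rightarrow> real^('n + 'n)^('n + 'n)" where
  "berger_metric g \<phi> \<delta> z =
    (let x = xpart z; u = upart z;
         N = (\<lambda>i k. \<Sum>j\<in>UNIV. u $ j * christoffel g x k i j);
         w = (\<lambda>i. gform g x (axis i 1) (\<phi> x *v u));
         h = (\<lambda>i j. g x $ i $ j + \<delta>^2 * w i * w j)
     in (\<chi> a b. case (a, b) of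
            (Inl i, Inl j) \<Rightarrow> g x $ i $ j + (\<Sum>k\<in>UNIV. \<Sum>l\<in>UNIV. N i k * N j l * h k l)
          | (Inl i, Inr j) \<Rightarrow> (\<Sum>k\<in>UNIV. N i k * h k j)
          | (Inr i, Inl j) \<Rightarrow> (\<Sum>k\<in>UNIV. N j k * h i k)
          | (Inr i, Inr j) \<Rightarrow> h i j))"

definition sasaki_metric :: "(real^'n \<Rightarrow> real^'n^'n) \<Rightarrow> (real^'n \<Rightarrow> real^'n^'n)
    \<Rightarrow> real^('n + 'n) \<Rightarrow> real^('n + 'n)^('n + 'n)" where
  "sasaki_metric g \<phi> = berger_metric g \<phi> 0"

text \<open>Components of the second fundamental form beta(I) = nabla^{G2} - nabla^{G1} of the
identity map I : (D, G1) -> (D, G2): beta(d_a, d_b) = sum_c beta_comp c a b d_c.\<close>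
definition beta_comp :: "(real^'m \<Rightarrow> real^'m^'m) \<Rightarrow> (real^'m \<Rightarrow> real^'m^'m)
    \<Rightarrow> real^'m \<Rightarrow> 'm \<Rightarrow> 'm \<Rightarrow> 'm \<Rightarrow> real" where
  "beta_comp G1 G2 z c a b = christoffel G2 z c a b - christoffel G1 z c a b"

definition totally_geodesic_id :: "(real^'m) set \<Rightarrow> (real^'m \<Rightarrow> real^'m^'m)
    \<Rightarrow> (real^'m \<Rightarrow> real^'m^'m) \<Rightarrow> bool" where
  "totally_geodesic_id D G1 G2 \<longleftrightarrow> (\<forall>z\<in>D. \<forall>c a b. beta_comp G1 G2 z c a b = 0)"

definition harmonic_id :: "(real^'m) set \<Rightarrow> (real^'m \<Rightarrow> real^'m^'m)
    \<Rightarrow> (real^'m \<Rightarrow> real^'m^'m) \<Rightarrow> bool" where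
  "harmonic_id D G1 G2 \<longleftrightarrow> (\<forall>z\<in>D. \<forall>c.
      (\<Sum>a\<in>UNIV. \<Sum>b\<in>UNIV. matrix_inv (G1 z) $ a $ b * beta_comp G1 G2 z c a b) = 0)"

end

theory Submission
  imports Defs
begin

section \<open>Sums over sum types, block matrices\<close>

lemma sum_UNIV_Plus: "(\<Sum>a\<in>(UNIV::('a::finite + 'b::finite) set). f a) = (\<Sum>i\<in>UNIV. f (Inl i)) + (\<Sum>j\<in>UNIV. f (Inr j))"
  by (subst UNIV_Plus_UNIV[symmetric], subst sum.Plus) (simp_all add: comp_def)

definition blk :: "'a::zero^'n^'n \<Rightarrow> 'a^'n^'n \<Rightarrow> 'a^'n^'n \<Rightarrow> 'a^'n^'n \<Rightarrow> 'a^('n+'n)^('n+'n)" where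
  "blk A B C D = (\<chi> a b. case a of Inl i \<Rightarrow> (case b of Inl j \<Rightarrow> A$i$j | Inr j \<Rightarrow> B$i$j)
                                 | Inr i \<Rightarrow> (case b of Inl j \<Rightarrow> C$i$j | Inr j \<Rightarrow> D$i$j))"

definition vb :: "'a^'n \<Rightarrow> 'a^'n \<Rightarrow> 'a^('n+'n)" where
  "vb x y = (\<chi> a. case a of Inl i \<Rightarrow> x$i | Inr i \<Rightarrow> y$i)"

lemma blk_nth[simp]:
  "blk A B C D $ Inl i $ Inl j = A$i$j" "blk A B C D $ Inl i $ Inr j = B$i$j"
  "blk A B C D $ Inr i $ Inl j = C$i$j" "blk A B C D $ Inr i $ Inr j = D$i$j"
  by (simp_all add: blk_def)

lemma vb_nth[simp]: "vb x y $ Inl i = x$i" "vb x y $ Inr i = y$i"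
  by (simp_all add: vb_def)

lemma blk_ext: "M = blk (\<chi> i j. M$Inl i$Inl j) (\<chi> i j. M$Inl i$Inr j) (\<chi> i j. M$Inr i$Inl j) (\<chi> i j. M$Inr i$Inr j)"
  by (simp add: vec_eq_iff, intro allI, rename_tac a b, case_tac a; case_tac b; simp)

lemma blk_mult:
  fixes A :: "'a::semiring_1^'n^'n"
  shows "blk A B C D ** blk E F G H = blk (A**E + B**G) (A**F + B**H) (C**E + D**G) (C**F + D**H)"
  by (simp add: vec_eq_iff, intro allI, rename_tac a b, case_tac a; case_tac b;
      simp add: matrix_matrix_mult_def sum_UNIV_Plus)

lemma blk_mv:
  fixes A :: "'a::semiring_1^'n^'n"
  shows "blk A B C D *v vb x y = vb (A *v x + B *v y) (C *v x + D *v y)"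
  by (simp add: vec_eq_iff, intro allI, rename_tac a, case_tac a;
      simp add: matrix_vector_mult_def sum_UNIV_Plus)

lemma mat1_blk: "(mat 1 :: 'a::semiring_1^('n::finite+'n)^('n+'n)) = blk (mat 1) 0 0 (mat 1)"
  by (simp add: vec_eq_iff, intro allI, rename_tac a b, case_tac a; case_tac b; simp add: mat_def)

lemma transpose_blk: "transpose (blk A B C D) = blk (transpose A) (transpose C) (transpose B) (transpose D)"
  by (simp add: vec_eq_iff, intro allI, rename_tac a b, case_tac a; case_tac b; simp add: transpose_def)

lemma blk_add: "blk A B C D + blk A' B' C' D' = blk (A+A') (B+B') (C+C') (D+D')"
  by (simp add: vec_eq_iff, intro allI, rename_tac a b, case_tac a; case_tac b; simp)

lemma blk_scaleR: "r *\<^sub>R blk A B C D = blk (r *\<^sub>R A) (r *\<^sub>R B) (r *\<^sub>R C) (r *\<^sub>R D)"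
  by (simp add: vec_eq_iff, intro allI, rename_tac a b, case_tac a; case_tac b; simp)

lemma blk_minus: "blk A B C D - blk A' B' C' D' = blk (A-A') (B-B') (C-C') (D-D')"
  by (simp add: vec_eq_iff, intro allI, rename_tac a b, case_tac a; case_tac b; simp)

section \<open>Outer products and matrix algebra\<close>

definition outer :: "'a::times^'n \<Rightarrow> 'a^'m \<Rightarrow> 'a^'m^'n" where
  "outer a b = (\<chi> i j. a$i * b$j)"

lemma outer_nth[simp]: "outer a b $ i $ j = a$i * b$j" by (simp add: outer_def)

lemma outer_vb: "outer (vb a b) (vb c d) = blk (outer a c) (outer a d) (outer b c) (outer b d)"
  by (simp add: vec_eq_iff, intro allI, rename_tac i j, case_tac i; case_tac j; simp)

lemma mult_outer: "(M::'a::comm_semiring_1^'n^'m) ** outer a b = outer (M *v a) b"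
  by (simp add: vec_eq_iff matrix_matrix_mult_def matrix_vector_mult_def sum_distrib_right mult.assoc)

lemma outer_mult: "outer a b ** (M::'a::comm_semiring_1^'p^'n) = outer a (transpose M *v b)"
  by (simp add: vec_eq_iff matrix_matrix_mult_def matrix_vector_mult_def sum_distrib_left mult_ac transpose_def)

lemma transpose_outer: "transpose (outer (a::'a::comm_semiring_1^'n) b) = outer b a"
  unfolding vec_eq_iff transpose_def by (auto simp: mult.commute)

lemma matrix_add_rdistrib: "((B + C) ** A) = (B ** A) + (C ** A)"
  by (vector matrix_matrix_mult_def sum.distrib[symmetric] field_simps)

lemma matrix_neg_left: "(- A :: 'a::ring_1^'n^'m) ** B = - (A ** B)"
  by (vector matrix_matrix_mult_def sum_negf)

lemma matrix_neg_right: "(A :: 'a::ring_1^'n^'m) ** (- B) = - (A ** B)"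
  by (vector matrix_matrix_mult_def sum_negf)

lemma matrix_diff_ldistrib: "(A :: 'a::ring_1^'n^'m) ** (B - C) = A ** B - A ** C"
  by (vector matrix_matrix_mult_def sum_subtractf right_diff_distrib)

lemma matrix_diff_rdistrib: "((B - C) :: 'a::ring_1^'n^'m) ** A = B ** A - C ** A"
  by (vector matrix_matrix_mult_def sum_subtractf left_diff_distrib)

lemma transpose_add: "transpose (A + B) = transpose A + transpose B"
  by (simp add: vec_eq_iff transpose_def)

lemma transpose_neg: "transpose (- A) = - transpose A"
  by (simp add: vec_eq_iff transpose_def)

lemma transpose_scaleR: "transpose (r *\<^sub>R A) = r *\<^sub>R transpose A"
  by (simp add: vec_eq_iff transpose_def)

lemma matrix_inv_eqI:
  fixes A :: "'a::field^'n^'n"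
  assumes "A ** B = mat 1" "B ** A = mat 1"
  shows "matrix_inv A = B"
proof -
  have ex: "\<exists>B'. A ** B' = mat 1 \<and> B' ** A = mat 1" using assms by blast
  have "A ** matrix_inv A = mat 1 \<and> matrix_inv A ** A = mat 1"
    unfolding matrix_inv_def by (rule someI_ex[OF ex])
  then have "matrix_inv A = (B ** A) ** matrix_inv A" using assms by simp
  also have "\<dots> = B" by (metis \<open>_ \<and> _\<close> matrix_mul_assoc matrix_mul_rid)
  finally show ?thesis .
qed

lemma matrix_inv_props:
  fixes A :: "'a::field^'n^'n"
  assumes "invertible A"
  shows "A ** matrix_inv A = mat 1" "matrix_inv A ** A = mat 1"
proof -
  have ex: "\<exists>B'. A ** B' = mat 1 \<and> B' ** A = mat 1" using assms unfolding invertible_def by blast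
  show "A ** matrix_inv A = mat 1" "matrix_inv A ** A = mat 1"
    using someI_ex[OF ex] unfolding matrix_inv_def by auto
qed

section \<open>Partial derivative calculus\<close>

definition ld :: "(real^'m \<Rightarrow> real) \<Rightarrow> real^'m \<Rightarrow> 'm \<Rightarrow> bool" where
  "ld f z a \<longleftrightarrow> (\<lambda>t. f (z + t *\<^sub>R axis a 1)) differentiable (at 0)"

lemma ld_DERIV: "ld f z a \<Longrightarrow> DERIV (\<lambda>t. f (z + t *\<^sub>R axis a 1)) 0 :> pd f a z"
  unfolding ld_def pd_def by (simp add: DERIV_deriv_iff_real_differentiable)

lemma pd_eqI: "DERIV (\<lambda>t. f (z + t *\<^sub>R axis a 1)) 0 :> D \<Longrightarrow> pd f a z = D"
  unfolding pd_def by (rule DERIV_imp_deriv)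

lemma ldI: "DERIV (\<lambda>t. f (z + t *\<^sub>R axis a 1)) 0 :> D \<Longrightarrow> ld f z a"
  unfolding ld_def using DERIV_deriv_iff_real_differentiable DERIV_imp_deriv by metis

lemma ld_add: "ld f z a \<Longrightarrow> ld h z a \<Longrightarrow> ld (\<lambda>w. f w + h w) z a"
  unfolding ld_def by simp
lemma ld_mult: "ld f z a \<Longrightarrow> ld h z a \<Longrightarrow> ld (\<lambda>w. f w * h w) z a"
  unfolding ld_def by simp
lemma ld_const: "ld (\<lambda>w. c) z a"
  unfolding ld_def by simp
lemma ld_sum: "(\<And>i. i \<in> S \<Longrightarrow> ld (f i) z a) \<Longrightarrow> finite S \<Longrightarrow> ld (\<lambda>w. \<Sum>i\<in>S. f i w) z a"
  unfolding ld_def by (rule differentiable_sum) auto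

lemma pd_add: "ld f z a \<Longrightarrow> ld h z a \<Longrightarrow> pd (\<lambda>w. f w + h w) a z = pd f a z + pd h a z"
  by (rule pd_eqI) (auto intro!: derivative_eq_intros ld_DERIV)
lemma pd_mult: "ld f z a \<Longrightarrow> ld h z a \<Longrightarrow> pd (\<lambda>w. f w * h w) a z = pd f a z * h z + f z * pd h a z"
  by (rule pd_eqI) (auto intro!: derivative_eq_intros ld_DERIV)
lemma pd_cmult: "ld f z a \<Longrightarrow> pd (\<lambda>w. c * f w) a z = c * pd f a z"
  by (rule pd_eqI) (auto intro!: derivative_eq_intros ld_DERIV)
lemma pd_sum: "(\<And>i. i \<in> S \<Longrightarrow> ld (f i) z a) \<Longrightarrow> pd (\<lambda>w. \<Sum>i\<in>S. f i w) a z = (\<Sum>i\<in>S. pd (f i) a z)"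
  by (rule pd_eqI) (auto intro!: derivative_eq_intros ld_DERIV)

lemma sum_swap_sym:
  fixes M :: "real^'m^'m"
  assumes "transpose M = M"
  shows "(\<Sum>a\<in>UNIV. \<Sum>b\<in>UNIV. M$a$b * F b a) = (\<Sum>a\<in>UNIV. \<Sum>b\<in>UNIV. M$a$b * F a b)"
proof -
  have s: "M$b$a = M$a$b" for a b using assms by (metis transpose_def vec_lambda_beta)
  have "(\<Sum>a\<in>UNIV. \<Sum>b\<in>UNIV. M$a$b * F b a) = (\<Sum>b\<in>UNIV. \<Sum>a\<in>UNIV. M$a$b * F b a)"
    by (rule sum.swap)
  also have "\<dots> = (\<Sum>b\<in>UNIV. \<Sum>a\<in>UNIV. M$b$a * F b a)" by (simp add: s)
  finally show ?thesis .
qed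

lemma generic_trace:
  fixes G1 G2 :: "real^'m \<Rightarrow> real^'m^'m" and f :: "real^'m \<Rightarrow> real^'m"
    and z :: "real^'m" and d c e :: real and k :: 'm
  defines "\<theta> \<equiv> (\<lambda>w. G2 w *v f w)"
  assumes G1eq: "\<And>w. G1 w = G2 w + d *\<^sub>R outer (\<theta> w) (\<theta> w)"
    and ldG: "\<And>a b l. ld (\<lambda>w. G2 w $ b $ l) z a"
    and ldf: "\<And>a l. ld (\<lambda>w. f w $ l) z a"
    and M1sym: "transpose (matrix_inv (G1 z)) = matrix_inv (G1 z)"
    and M2eq: "matrix_inv (G2 z) = matrix_inv (G1 z) + c *\<^sub>R outer (f z) (f z)"
    and M1th: "matrix_inv (G1 z) *v \<theta> z = e *\<^sub>R f z"
    and ce: "c = d * e"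
  shows "(\<Sum>a\<in>UNIV. \<Sum>b\<in>UNIV. matrix_inv (G1 z)$a$b * beta_comp G1 G2 z k a b)
     = c * f z $ k * ( - (\<Sum>a\<in>UNIV. \<Sum>l\<in>UNIV. (matrix_inv (G1 z) ** G2 z)$a$l * pd (\<lambda>w. f w$l) a z)
          - (1/2) * (\<Sum>a\<in>UNIV. \<Sum>b\<in>UNIV. matrix_inv (G1 z)$a$b * (\<Sum>l\<in>UNIV. f z$l * pd (\<lambda>w. G2 w$a$b) l z)))
       - c * (\<Sum>l\<in>UNIV. matrix_inv (G1 z)$k$l * (\<Sum>a\<in>UNIV. f z$a * (pd (\<lambda>w. \<theta> w$l) a z - pd (\<lambda>w. \<theta> w$a) l z)))"
proof -
  define M1 where "M1 = matrix_inv (G1 z)"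
  define M2 where "M2 = matrix_inv (G2 z)"
  define \<zeta> where "\<zeta> = f z"
  define P where "P a b l = pd (\<lambda>w. G2 w $ b $ l) a z" for a b l
  define Q where "Q a l = pd (\<lambda>w. f w $ l) a z" for a l
  define Td where "Td a b = pd (\<lambda>w. \<theta> w $ b) a z" for a b
  define th where "th = \<theta> z"
  have M1s: "M1$b$a = M1$a$b" for a b using M1sym unfolding M1_def by (metis transpose_def vec_lambda_beta)
  have th_comp: "\<theta> w $ b = (\<Sum>l\<in>UNIV. G2 w $ b $ l * f w $ l)" for w b
    unfolding \<theta>_def by (simp add: matrix_vector_mult_def)
  have ldth: "ld (\<lambda>w. \<theta> w $ b) z a" for a b
    unfolding th_comp by (intro ld_sum ld_mult ldG ldf) auto
  have Td_eq: "Td a b = (\<Sum>l\<in>UNIV. P a b l * \<zeta>$l + G2 z$b$l * Q a l)" for a b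
    unfolding Td_def th_comp P_def Q_def \<zeta>_def
    by (subst pd_sum) (auto intro!: ld_mult ldG ldf simp: pd_mult ldG ldf)
  have G1c: "G1 w $ b $ l = G2 w $ b $ l + d * (\<theta> w $ b * \<theta> w $ l)" for w b l
    by (simp add: G1eq)
  have pdG1: "pd (\<lambda>w. G1 w $ b $ l) a z = P a b l + d * (th$b * Td a l + Td a b * th$l)" for a b l
  proof -
    have "pd (\<lambda>w. G1 w $ b $ l) a z = pd (\<lambda>w. G2 w $ b $ l + d * (\<theta> w $ b * \<theta> w $ l)) a z"
      by (simp add: G1c)
    also have "\<dots> = P a b l + d * (Td a b * th$l + th$b * Td a l)"
      unfolding P_def Td_def th_def
      by (simp add: pd_add pd_cmult pd_mult ldG ldth ld_mult ld_const)
    finally show ?thesis by (simp add: algebra_simps)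
  qed
  define K2 where "K2 a b l = (1/2) * (P a b l + P b a l - P l a b)" for a b l
  define Kt where "Kt a b l = (1/2) * (th$b * Td a l + Td a b * th$l + th$a * Td b l + Td b a * th$l
        - th$a * Td l b - Td l a * th$b)" for a b l
  have chr1: "christoffel G1 z k a b = (\<Sum>l\<in>UNIV. M1$k$l * (K2 a b l + d * Kt a b l))" for a b
    unfolding christoffel_def M1_def[symmetric] pdG1 K2_def Kt_def
    by (simp add: sum_distrib_left algebra_simps)
  have chr2: "christoffel G2 z k a b = (\<Sum>l\<in>UNIV. M2$k$l * K2 a b l)" for a b
    unfolding christoffel_def M2_def[symmetric] K2_def P_def[symmetric]
    by (simp add: sum_distrib_left algebra_simps)
  have M2c: "M2$k$l = M1$k$l + c * (\<zeta>$k * \<zeta>$l)" for l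
    using M2eq unfolding M1_def M2_def \<zeta>_def by simp
  have beta: "beta_comp G1 G2 z k a b = c * \<zeta>$k * (\<Sum>l\<in>UNIV. \<zeta>$l * K2 a b l) - d * (\<Sum>l\<in>UNIV. M1$k$l * Kt a b l)" for a b
    unfolding beta_comp_def chr1 chr2 M2c
    by (simp add: algebra_simps sum.distrib sum_distrib_left sum_subtractf)
  define T1 where "T1 = (\<Sum>a\<in>UNIV. \<Sum>b\<in>UNIV. M1$a$b * (\<Sum>l\<in>UNIV. \<zeta>$l * K2 a b l))"
  define T2 where "T2 l = (\<Sum>a\<in>UNIV. \<Sum>b\<in>UNIV. M1$a$b * Kt a b l)" for l
  have tr1: "(\<Sum>a\<in>UNIV. \<Sum>b\<in>UNIV. M1$a$b * beta_comp G1 G2 z k a b) = c * \<zeta>$k * T1 - d * (\<Sum>l\<in>UNIV. M1$k$l * T2 l)"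
  proof -
    have "(\<Sum>a\<in>UNIV. \<Sum>b\<in>UNIV. M1$a$b * beta_comp G1 G2 z k a b)
       = (\<Sum>a\<in>UNIV. \<Sum>b\<in>UNIV. c * \<zeta>$k * (M1$a$b * (\<Sum>l\<in>UNIV. \<zeta>$l * K2 a b l)) - d * (\<Sum>l\<in>UNIV. M1$k$l * (M1$a$b * Kt a b l)))"
      unfolding beta by (simp add: algebra_simps sum_distrib_left)
    also have "\<dots> = c * \<zeta>$k * T1 - d * (\<Sum>a\<in>UNIV. \<Sum>b\<in>UNIV. \<Sum>l\<in>UNIV. M1$k$l * (M1$a$b * Kt a b l))"
      unfolding T1_def by (simp add: sum_subtractf sum_distrib_left)
    also have "(\<Sum>a\<in>UNIV. \<Sum>b\<in>UNIV. \<Sum>l\<in>UNIV. M1$k$l * (M1$a$b * Kt a b l)) = (\<Sum>l\<in>UNIV. M1$k$l * T2 l)"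
    proof -
      have "(\<Sum>a\<in>UNIV. \<Sum>b\<in>UNIV. \<Sum>l\<in>UNIV. M1$k$l * (M1$a$b * Kt a b l))
          = (\<Sum>a\<in>UNIV. \<Sum>l\<in>UNIV. \<Sum>b\<in>UNIV. M1$k$l * (M1$a$b * Kt a b l))"
        by (rule sum.cong[OF refl], rule sum.swap)
      also have "\<dots> = (\<Sum>l\<in>UNIV. \<Sum>a\<in>UNIV. \<Sum>b\<in>UNIV. M1$k$l * (M1$a$b * Kt a b l))"
        by (rule sum.swap)
      finally show ?thesis unfolding T2_def by (simp add: sum_distrib_left)
    qed
    finally show ?thesis .
  qed
  define S where "S = (\<Sum>a\<in>UNIV. \<Sum>b\<in>UNIV. M1$a$b * Td a b)"
  define X where "X = (\<Sum>a\<in>UNIV. \<Sum>b\<in>UNIV. M1$a$b * (\<Sum>l\<in>UNIV. \<zeta>$l * P l a b))"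
  define E where "E l = (\<Sum>a\<in>UNIV. \<zeta>$a * (Td a l - Td l a))" for l
  have M1sym': "transpose M1 = M1" using M1sym M1_def by simp
  have T1eq: "T1 = (\<Sum>a\<in>UNIV. \<Sum>b\<in>UNIV. M1$a$b * (\<Sum>l\<in>UNIV. \<zeta>$l * P a b l)) - (1/2) * X"
  proof -
    have sw: "(\<Sum>a\<in>UNIV. \<Sum>b\<in>UNIV. M1$a$b * (\<Sum>l\<in>UNIV. \<zeta>$l * P b a l))
        = (\<Sum>a\<in>UNIV. \<Sum>b\<in>UNIV. M1$a$b * (\<Sum>l\<in>UNIV. \<zeta>$l * P a b l))"
      by (rule sum_swap_sym[OF M1sym', where F="\<lambda>a b. \<Sum>l\<in>UNIV. \<zeta>$l * P a b l"])
    have "T1 = (\<Sum>a\<in>UNIV. \<Sum>b\<in>UNIV. (1/2) * (M1$a$b * (\<Sum>l\<in>UNIV. \<zeta>$l * P a b l))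
         + (1/2) * (M1$a$b * (\<Sum>l\<in>UNIV. \<zeta>$l * P b a l)) - (1/2) * (M1$a$b * (\<Sum>l\<in>UNIV. \<zeta>$l * P l a b)))"
      unfolding T1_def K2_def
      by (simp add: algebra_simps sum.distrib sum_subtractf sum_distrib_left)
    also have "\<dots> = (1/2) * (\<Sum>a\<in>UNIV. \<Sum>b\<in>UNIV. M1$a$b * (\<Sum>l\<in>UNIV. \<zeta>$l * P a b l))
        + (1/2) * (\<Sum>a\<in>UNIV. \<Sum>b\<in>UNIV. M1$a$b * (\<Sum>l\<in>UNIV. \<zeta>$l * P b a l)) - (1/2) * X"
      unfolding X_def by (simp add: sum.distrib sum_subtractf sum_distrib_left)
    finally show ?thesis using sw by simp
  qed
  have M1thc: "(\<Sum>b\<in>UNIV. M1$a$b * th$b) = e * \<zeta>$a" for a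
    using M1th unfolding M1_def th_def \<zeta>_def by (simp add: matrix_vector_mult_def vec_eq_iff)
  have T2eq: "T2 l = e * E l + th$l * S" for l
  proof -
    have sw1: "(\<Sum>a\<in>UNIV. \<Sum>b\<in>UNIV. M1$a$b * (th$a * Td b l)) = (\<Sum>a\<in>UNIV. \<Sum>b\<in>UNIV. M1$a$b * (th$b * Td a l))"
      by (rule sum_swap_sym[OF M1sym', where F="\<lambda>a b. th$b * Td a l"])
    have sw2: "(\<Sum>a\<in>UNIV. \<Sum>b\<in>UNIV. M1$a$b * (Td b a * th$l)) = (\<Sum>a\<in>UNIV. \<Sum>b\<in>UNIV. M1$a$b * (Td a b * th$l))"
      by (rule sum_swap_sym[OF M1sym', where F="\<lambda>a b. Td a b * th$l"])
    have sw3: "(\<Sum>a\<in>UNIV. \<Sum>b\<in>UNIV. M1$a$b * (th$a * Td l b)) = (\<Sum>a\<in>UNIV. \<Sum>b\<in>UNIV. M1$a$b * (th$b * Td l a))"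
      by (rule sum_swap_sym[OF M1sym', where F="\<lambda>a b. th$b * Td l a"])
    have "T2 l = (1/2) * ((\<Sum>a\<in>UNIV. \<Sum>b\<in>UNIV. M1$a$b * (th$b * Td a l)) + (\<Sum>a\<in>UNIV. \<Sum>b\<in>UNIV. M1$a$b * (Td a b * th$l))
       + (\<Sum>a\<in>UNIV. \<Sum>b\<in>UNIV. M1$a$b * (th$a * Td b l)) + (\<Sum>a\<in>UNIV. \<Sum>b\<in>UNIV. M1$a$b * (Td b a * th$l))
       - (\<Sum>a\<in>UNIV. \<Sum>b\<in>UNIV. M1$a$b * (th$a * Td l b)) - (\<Sum>a\<in>UNIV. \<Sum>b\<in>UNIV. M1$a$b * (th$b * Td l a)))"
      unfolding T2_def Kt_def
      by (simp add: algebra_simps sum.distrib sum_subtractf sum_distrib_left)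
    also have "\<dots> = (\<Sum>a\<in>UNIV. \<Sum>b\<in>UNIV. M1$a$b * (th$b * Td a l)) + (\<Sum>a\<in>UNIV. \<Sum>b\<in>UNIV. M1$a$b * (Td a b * th$l))
       - (\<Sum>a\<in>UNIV. \<Sum>b\<in>UNIV. M1$a$b * (th$b * Td l a))"
      unfolding sw1 sw2 sw3 by simp
    also have "\<dots> = (\<Sum>a\<in>UNIV. (\<Sum>b\<in>UNIV. M1$a$b * th$b) * (Td a l - Td l a)) + th$l * S"
      unfolding S_def by (simp add: algebra_simps sum.distrib sum_subtractf sum_distrib_left sum_distrib_right)
    also have "\<dots> = e * E l + th$l * S"
      unfolding M1thc E_def by (simp add: sum_distrib_left algebra_simps)
    finally show ?thesis .
  qed
  have M1thk: "(\<Sum>l\<in>UNIV. M1$k$l * th$l) = e * \<zeta>$k" by (rule M1thc)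
  have TS: "T1 - S = - (\<Sum>a\<in>UNIV. \<Sum>l\<in>UNIV. (M1 ** G2 z)$a$l * Q a l) - (1/2) * X"
  proof -
    have "(\<Sum>a\<in>UNIV. \<Sum>b\<in>UNIV. M1$a$b * (\<Sum>l\<in>UNIV. \<zeta>$l * P a b l)) - S
        = - (\<Sum>a\<in>UNIV. \<Sum>b\<in>UNIV. \<Sum>l\<in>UNIV. M1$a$b * (G2 z$b$l * Q a l))"
      unfolding S_def Td_eq
      by (simp add: algebra_simps sum.distrib sum_subtractf sum_distrib_left)
    also have "(\<Sum>a\<in>UNIV. \<Sum>b\<in>UNIV. \<Sum>l\<in>UNIV. M1$a$b * (G2 z$b$l * Q a l))
        = (\<Sum>a\<in>UNIV. \<Sum>l\<in>UNIV. (M1 ** G2 z)$a$l * Q a l)"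
      unfolding matrix_matrix_mult_def
      by (simp add: sum_distrib_right mult.assoc, rule sum.cong[OF refl], rule sum.swap)
    finally show ?thesis unfolding T1eq by simp
  qed
  have "(\<Sum>a\<in>UNIV. \<Sum>b\<in>UNIV. M1$a$b * beta_comp G1 G2 z k a b)
      = c * \<zeta>$k * T1 - d * (e * (\<Sum>l\<in>UNIV. M1$k$l * E l) + S * (\<Sum>l\<in>UNIV. M1$k$l * th$l))"
    unfolding tr1 T2eq by (simp add: algebra_simps sum.distrib sum_distrib_left sum_distrib_right)
  also have "\<dots> = c * \<zeta>$k * (T1 - S) - c * (\<Sum>l\<in>UNIV. M1$k$l * E l)"
    unfolding M1thk ce by (simp add: algebra_simps)
  finally show ?thesis
    unfolding TS M1_def[symmetric] \<zeta>_def[symmetric] E_def Td_def Q_def X_def P_def .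

qed

definition Nm :: "(real^'n \<Rightarrow> real^'n^'n) \<Rightarrow> real^'n \<Rightarrow> real^'n \<Rightarrow> real^'n^'n" where
  "Nm g x u = (\<chi> i k. \<Sum>j\<in>UNIV. u$j * christoffel g x k i j)"
definition wv :: "(real^'n \<Rightarrow> real^'n^'n) \<Rightarrow> (real^'n \<Rightarrow> real^'n^'n) \<Rightarrow> real^'n \<Rightarrow> real^'n \<Rightarrow> real^'n" where
  "wv g \<phi> x u = g x *v (\<phi> x *v u)"
definition hm :: "(real^'n \<Rightarrow> real^'n^'n) \<Rightarrow> (real^'n \<Rightarrow> real^'n^'n) \<Rightarrow> real \<Rightarrow> real^'n \<Rightarrow> real^'n \<Rightarrow> real^'n^'n" where
  "hm g \<phi> \<delta> x u = g x + \<delta>^2 *\<^sub>R outer (wv g \<phi> x u) (wv g \<phi> x u)"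

lemma gform_axis: "gform g x (axis i 1) v = (g x *v v) $ i"
  unfolding gform_def by (simp add: inner_axis')

lemma berger_blk:
  "berger_metric g \<phi> \<delta> z = blk (g (xpart z) + Nm g (xpart z) (upart z) ** hm g \<phi> \<delta> (xpart z) (upart z) ** transpose (Nm g (xpart z) (upart z)))
      (Nm g (xpart z) (upart z) ** hm g \<phi> \<delta> (xpart z) (upart z))
      (hm g \<phi> \<delta> (xpart z) (upart z) ** transpose (Nm g (xpart z) (upart z)))
      (hm g \<phi> \<delta> (xpart z) (upart z))"
proof -
  define x where "x = xpart z"
  define u where "u = upart z"
  define N where "N = Nm g x u"
  define h where "h = hm g \<phi> \<delta> x u"
  have Nc: "(\<Sum>j\<in>UNIV. u $ j * christoffel g x k i j) = N$i$k" for i k by (simp add: N_def Nm_def)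
  have hc: "g x $ i $ j + \<delta>\<^sup>2 * gform g x (axis i 1) (\<phi> x *v u) * gform g x (axis j 1) (\<phi> x *v u) = h$i$j" for i j
    by (simp add: h_def hm_def gform_axis wv_def)
  have LL: "(\<Sum>k\<in>UNIV. \<Sum>l\<in>UNIV. N$i$k * N$j$l * h$k$l) = (N ** h ** transpose N)$i$j" for i j
    unfolding matrix_matrix_mult_def transpose_def
    by (simp add: sum_distrib_right sum_distrib_left mult_ac, rule sum.swap)
  have LR: "(\<Sum>k\<in>UNIV. N$i$k * h$k$j) = (N ** h)$i$j" for i j
    by (simp add: matrix_matrix_mult_def)
  have RL: "(\<Sum>k\<in>UNIV. N$j$k * h$i$k) = (h ** transpose N)$i$j" for i j
    by (simp add: matrix_matrix_mult_def transpose_def mult.commute)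
  show ?thesis
    unfolding x_def[symmetric] u_def[symmetric] N_def[symmetric] h_def[symmetric]
    unfolding berger_metric_def Let_def x_def[symmetric] u_def[symmetric] Nc hc
    by (simp add: vec_eq_iff, intro allI, rename_tac a b, case_tac a; case_tac b; simp add: LL LR RL)
qed

definition thv :: "(real^'n \<Rightarrow> real^'n^'n) \<Rightarrow> (real^'n \<Rightarrow> real^'n^'n) \<Rightarrow> real^('n+'n) \<Rightarrow> real^('n+'n)" where
  "thv g \<phi> z = vb (Nm g (xpart z) (upart z) *v wv g \<phi> (xpart z) (upart z)) (wv g \<phi> (xpart z) (upart z))"
definition fv :: "(real^'n \<Rightarrow> real^'n^'n) \<Rightarrow> real^('n+'n) \<Rightarrow> real^('n+'n)" where
  "fv \<phi> z = vb 0 (\<phi> (xpart z) *v upart z)"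

lemma hm0: "hm g \<phi> 0 x u = g x" by (simp add: hm_def)

lemma sasaki_blk:
  "sasaki_metric g \<phi> z = blk (g (xpart z) + Nm g (xpart z) (upart z) ** g (xpart z) ** transpose (Nm g (xpart z) (upart z)))
      (Nm g (xpart z) (upart z) ** g (xpart z)) (g (xpart z) ** transpose (Nm g (xpart z) (upart z))) (g (xpart z))"
  unfolding sasaki_metric_def berger_blk hm0 ..

lemma mv_outer: "outer a b *v v = (b \<bullet> v) *\<^sub>R (a :: real^'n)"
  by (simp add: vec_eq_iff matrix_vector_mult_def inner_vec_def sum_distrib_left mult_ac)

lemma outer_scaleR_left: "outer (r *\<^sub>R a) b = r *\<^sub>R outer a (b::real^'m)"
  by (simp add: vec_eq_iff)
lemma outer_scaleR_right: "outer a (r *\<^sub>R b) = r *\<^sub>R outer (a::real^'m) (b::real^'p)"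
  by (simp add: vec_eq_iff)

lemma scaleR_mv: "(r *\<^sub>R A) *v v = r *\<^sub>R (A *v (v::real^'m) :: real^'p)"
  by (simp add: vec_eq_iff matrix_vector_mult_def sum_distrib_left mult.assoc)

lemma sasaki_f: "sasaki_metric g \<phi> z *v fv \<phi> z = thv g \<phi> z"
  unfolding sasaki_blk fv_def thv_def blk_mv wv_def
  by (simp add: matrix_vector_mul_assoc[symmetric])

lemma berger_sasaki: "berger_metric g \<phi> \<delta> z = sasaki_metric g \<phi> z + \<delta>^2 *\<^sub>R outer (thv g \<phi> z) (thv g \<phi> z)"
proof -
  define N where "N = Nm g (xpart z) (upart z)"
  define w where "w = wv g \<phi> (xpart z) (upart z)"
  define G where "G = g (xpart z)"
  have h: "hm g \<phi> \<delta> (xpart z) (upart z) = G + \<delta>^2 *\<^sub>R outer w w" by (simp add: hm_def G_def w_def)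
  show ?thesis
    unfolding berger_blk sasaki_blk thv_def N_def[symmetric] w_def[symmetric] G_def[symmetric] h
      outer_vb blk_scaleR blk_add
    by (simp add: matrix_add_ldistrib matrix_add_rdistrib matrix_scalar_ac scalar_matrix_assoc[symmetric]
        mult_outer outer_mult outer_scaleR_left scaleR_mv add.assoc)
qed

lemma G2_inv_right:
  fixes g gi N :: "real^'n^'n"
  assumes "g ** gi = mat 1"
  shows "blk (g + N ** g ** transpose N) (N ** g) (g ** transpose N) g **
         blk gi (-(gi ** N)) (-(transpose N ** gi)) (gi + transpose N ** gi ** N) = mat 1"
proof -
  have a: "X ** g ** gi = X" for X :: "real^'n^'n"
    by (metis assms matrix_mul_assoc matrix_mul_rid)
  show ?thesis
    unfolding blk_mult mat1_blk
    by (simp add: matrix_add_rdistrib matrix_add_ldistrib matrix_neg_right matrix_neg_left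
        matrix_mul_assoc a assms)
qed

lemma SM_right:
  fixes G2 M2 :: "real^'m^'m" and th ze :: "real^'m" and d c :: real
  assumes G2M2: "G2 ** M2 = mat 1" and M2G2: "M2 ** G2 = mat 1" and G2z: "G2 *v ze = th"
    and M2sym: "transpose M2 = M2" and nz: "1 + d * (th \<bullet> ze) \<noteq> 0"
    and c: "c = d / (1 + d * (th \<bullet> ze))"
  shows "(G2 + d *\<^sub>R outer th th) ** (M2 - c *\<^sub>R outer ze ze) = mat 1"
proof -
  define X where "X = outer th ze"
  have M2th: "M2 *v th = ze" using G2z M2G2 by (metis matrix_vector_mul_assoc matrix_vector_mul_lid)
  have e1: "G2 ** outer ze ze = X" unfolding X_def mult_outer G2z ..
  have e2: "outer th th ** M2 = X" unfolding X_def outer_mult M2sym M2th ..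
  have e3: "outer th th ** outer ze ze = (th \<bullet> ze) *\<^sub>R X"
    unfolding X_def outer_mult transpose_outer mv_outer outer_scaleR_right by (simp add: inner_commute)
  have cc: "d - c - d * c * (th \<bullet> ze) = 0" using nz unfolding c by (simp add: field_simps)
  have "(G2 + d *\<^sub>R outer th th) ** (M2 - c *\<^sub>R outer ze ze)
      = G2 ** M2 - c *\<^sub>R (G2 ** outer ze ze) + d *\<^sub>R (outer th th ** M2) - (d * c) *\<^sub>R (outer th th ** outer ze ze)"
    by (simp add: matrix_add_rdistrib matrix_diff_ldistrib matrix_scalar_ac scalar_matrix_assoc[symmetric] algebra_simps)
  also have "\<dots> = mat 1 + (d - c - d * c * (th \<bullet> ze)) *\<^sub>R X"
    unfolding e1 e2 e3 G2M2 by (simp add: algebra_simps)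
  finally show ?thesis using cc by simp
qed

definition frob :: "real^'n^'m \<Rightarrow> real^'n^'m \<Rightarrow> real" where
  "frob A B = (\<Sum>i\<in>UNIV. \<Sum>j\<in>UNIV. A$i$j * B$i$j)"

lemma sum3_rot: "(\<Sum>a\<in>UNIV. \<Sum>b\<in>UNIV. \<Sum>c\<in>UNIV. F a b c) = (\<Sum>b\<in>UNIV. \<Sum>c\<in>UNIV. \<Sum>a\<in>UNIV. (F a b c::real))"
proof -
  have "(\<Sum>a\<in>UNIV. \<Sum>b\<in>UNIV. \<Sum>c\<in>UNIV. F a b c) = (\<Sum>b\<in>UNIV. \<Sum>a\<in>UNIV. \<Sum>c\<in>UNIV. F a b c)"
    by (rule sum.swap)
  also have "\<dots> = (\<Sum>b\<in>UNIV. \<Sum>c\<in>UNIV. \<Sum>a\<in>UNIV. F a b c)"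
    by (rule sum.cong[OF refl], rule sum.swap)
  finally show ?thesis .
qed

lemma frob_mult_right: "frob A (B ** C) = frob (A ** transpose C) B"
proof -
  have "frob A (B ** C) = (\<Sum>i\<in>UNIV. \<Sum>j\<in>UNIV. \<Sum>k\<in>UNIV. A$i$j * B$i$k * C$k$j)"
    unfolding frob_def matrix_matrix_mult_def by (simp add: sum_distrib_left mult_ac)
  also have "\<dots> = (\<Sum>i\<in>UNIV. \<Sum>k\<in>UNIV. \<Sum>j\<in>UNIV. A$i$j * B$i$k * C$k$j)"
    by (rule sum.cong[OF refl], rule sum.swap)
  also have "\<dots> = frob (A ** transpose C) B"
    unfolding frob_def matrix_matrix_mult_def transpose_def by (simp add: sum_distrib_right sum_distrib_left mult_ac)
  finally show ?thesis .
qed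

lemma frob_mult_left: "frob A (B ** C) = frob (transpose B ** A) C"
proof -
  have "frob A (B ** C) = (\<Sum>i\<in>UNIV. \<Sum>j\<in>UNIV. \<Sum>k\<in>UNIV. A$i$j * B$i$k * C$k$j)"
    unfolding frob_def matrix_matrix_mult_def by (simp add: sum_distrib_left mult_ac)
  also have "\<dots> = (\<Sum>i\<in>UNIV. \<Sum>k\<in>UNIV. \<Sum>j\<in>UNIV. A$i$j * B$i$k * C$k$j)"
    by (rule sum.cong[OF refl], rule sum.swap)
  also have "\<dots> = (\<Sum>k\<in>UNIV. \<Sum>j\<in>UNIV. \<Sum>i\<in>UNIV. A$i$j * B$i$k * C$k$j)"
    by (rule sum3_rot)
  also have "\<dots> = frob (transpose B ** A) C"
    unfolding frob_def matrix_matrix_mult_def transpose_def by (simp add: sum_distrib_right sum_distrib_left mult_ac)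
  finally show ?thesis .
qed

lemma frob_neg: "frob (- A) B = - frob A B"
  by (simp add: frob_def sum_negf)

lemma trace_D_zero:
  fixes gi g N B :: "real^'n^'n" and \<psi> :: "real^'n"
  shows "(\<Sum>a\<in>UNIV. \<Sum>b\<in>UNIV. (blk gi (-(gi ** N)) (-(transpose N ** gi)) (gi + transpose N ** gi ** N)
       - c *\<^sub>R outer (vb 0 \<psi>) (vb 0 \<psi>))$a$b *
     (blk (B ** g ** transpose N + N ** g ** transpose B) (B ** g) (g ** transpose B) 0)$a$b) = 0"
proof -
  have split: "(\<Sum>a\<in>UNIV. \<Sum>b\<in>UNIV. F a b) = (\<Sum>i\<in>UNIV. \<Sum>j\<in>UNIV. F (Inl i) (Inl j)) + (\<Sum>i\<in>UNIV. \<Sum>j\<in>UNIV. F (Inl i) (Inr j))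
     + (\<Sum>i\<in>UNIV. \<Sum>j\<in>UNIV. F (Inr i) (Inl j)) + (\<Sum>i\<in>UNIV. \<Sum>j\<in>UNIV. F (Inr i) (Inr j))"
    for F :: "'n + 'n \<Rightarrow> 'n + 'n \<Rightarrow> real"
    by (simp add: sum_UNIV_Plus sum.distrib)
  have "(\<Sum>a\<in>UNIV. \<Sum>b\<in>UNIV. (blk gi (-(gi ** N)) (-(transpose N ** gi)) (gi + transpose N ** gi ** N)
       - c *\<^sub>R outer (vb 0 \<psi>) (vb 0 \<psi>))$a$b *
     (blk (B ** g ** transpose N + N ** g ** transpose B) (B ** g) (g ** transpose B) 0)$a$b)
     = frob gi (B ** g ** transpose N) + frob gi (N ** (g ** transpose B)) - frob (gi ** N) (B ** g)
       - frob (transpose N ** gi) (g ** transpose B)"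
    unfolding split frob_def by (simp add: sum.distrib algebra_simps sum_negf matrix_mul_assoc)
  also have "\<dots> = 0"
    unfolding frob_mult_right[of gi "B ** g"] frob_mult_left[of gi N] by simp
  finally show ?thesis .
qed

lemma xpart_add: "xpart (a + b) = xpart a + xpart b" by (simp add: xpart_def vec_eq_iff)
lemma upart_add: "upart (a + b) = upart a + upart b" by (simp add: upart_def vec_eq_iff)
lemma xpart_scaleR: "xpart (r *\<^sub>R a) = r *\<^sub>R xpart a" by (simp add: xpart_def vec_eq_iff)
lemma upart_scaleR: "upart (r *\<^sub>R a) = r *\<^sub>R upart a" by (simp add: upart_def vec_eq_iff)
lemma xpart_axis: "xpart (axis (Inl p) 1) = axis p 1" "xpart (axis (Inr p) 1) = 0"
  by (simp_all add: xpart_def vec_eq_iff axis_def)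
lemma upart_axis: "upart (axis (Inl p) 1) = 0" "upart (axis (Inr p) 1) = axis p 1"
  by (simp_all add: upart_def vec_eq_iff axis_def)
lemma xpart_vb: "xpart (vb x u) = x" by (simp add: xpart_def vec_eq_iff)
lemma upart_vb: "upart (vb x u) = u" by (simp add: upart_def vec_eq_iff)

lemma line_Inl: "xpart (z + t *\<^sub>R axis (Inl p) 1) = xpart z + t *\<^sub>R axis p 1"
   "upart (z + t *\<^sub>R axis (Inl p) 1) = upart z"
  by (simp_all add: xpart_add upart_add xpart_scaleR upart_scaleR xpart_axis upart_axis)
lemma line_Inr: "xpart (z + t *\<^sub>R axis (Inr p) 1) = xpart z"
   "upart (z + t *\<^sub>R axis (Inr p) 1) = upart z + t *\<^sub>R axis p 1"
  by (simp_all add: xpart_add upart_add xpart_scaleR upart_scaleR xpart_axis upart_axis)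

lemma Nm_lin: "Nm g x (u + t *\<^sub>R v) = Nm g x u + t *\<^sub>R Nm g x v"
  by (simp add: Nm_def vec_eq_iff algebra_simps sum.distrib sum_distrib_left)
lemma wv_lin: "wv g \<phi> x (u + t *\<^sub>R v) = wv g \<phi> x u + t *\<^sub>R wv g \<phi> x v"
  by (simp add: wv_def matrix_vector_right_distrib matrix_vector_mult_scaleR)

lemma quad_DERIV: "DERIV (\<lambda>t::real. a + t * b + t^2 * c) 0 :> b"
  by (auto intro!: derivative_eq_intros)

lemma quad_pd:
  assumes "\<And>t. f (z + t *\<^sub>R axis a 1) = A + t * B + t^2 * C"
  shows "pd f a z = B" "ld f z a"
  using quad_DERIV[of A B C] assms by (simp_all add: pd_eqI ldI)

section \<open>Derivatives in vertical directions\<close>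

lemma sasaki_Inr:
  fixes g \<phi> :: "real^'n \<Rightarrow> real^'n^'n" and z :: "real^('n+'n)" and j :: 'n
  defines "N \<equiv> Nm g (xpart z) (upart z)" and "B \<equiv> Nm g (xpart z) (axis j 1)" and "G \<equiv> g (xpart z)"
  shows "sasaki_metric g \<phi> (z + t *\<^sub>R axis (Inr j) 1) = sasaki_metric g \<phi> z
     + t *\<^sub>R blk (B ** G ** transpose N + N ** G ** transpose B) (B ** G) (G ** transpose B) 0
     + t^2 *\<^sub>R blk (B ** G ** transpose B) 0 0 0"
  unfolding sasaki_blk line_Inr Nm_lin N_def[symmetric] B_def[symmetric] G_def[symmetric]
  by (simp add: blk_add blk_scaleR matrix_add_ldistrib matrix_add_rdistrib transpose_add transpose_scaleR
      matrix_scalar_ac scalar_matrix_assoc[symmetric] power2_eq_square algebra_simps)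

lemma pd_sasaki_Inr:
  fixes g \<phi> :: "real^'n \<Rightarrow> real^'n^'n" and z :: "real^('n+'n)" and j :: 'n
  defines "N \<equiv> Nm g (xpart z) (upart z)" and "B \<equiv> Nm g (xpart z) (axis j 1)" and "G \<equiv> g (xpart z)"
  shows "pd (\<lambda>w. sasaki_metric g \<phi> w $ a $ b) (Inr j) z
           = blk (B ** G ** transpose N + N ** G ** transpose B) (B ** G) (G ** transpose B) 0 $ a $ b"
    "ld (\<lambda>w. sasaki_metric g \<phi> w $ a $ b) z (Inr j)"
  by (rule quad_pd, simp add: sasaki_Inr N_def B_def G_def)+

lemma fv_Inr: "fv \<phi> (z + t *\<^sub>R axis (Inr j) 1) = fv \<phi> z + t *\<^sub>R vb 0 (\<phi> (xpart z) *v axis j 1)"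
  unfolding fv_def line_Inr
  by (simp add: vec_eq_iff matrix_vector_right_distrib matrix_vector_mult_scaleR,
      intro allI, rename_tac a, case_tac a, simp_all)

lemma pd_fv_Inr: "pd (\<lambda>w. fv \<phi> w $ l) (Inr j) z = vb 0 (\<phi> (xpart z) *v axis j 1) $ l"
   "ld (\<lambda>w. fv \<phi> w $ l) z (Inr j)"
  by (rule quad_pd[where C=0], simp add: fv_Inr)+

lemma thv_Inr:
  fixes g \<phi> :: "real^'n \<Rightarrow> real^'n^'n" and z :: "real^('n+'n)" and j :: 'n
  defines "N \<equiv> Nm g (xpart z) (upart z)" and "B \<equiv> Nm g (xpart z) (axis j 1)"
    and "w \<equiv> wv g \<phi> (xpart z) (upart z)" and "w' \<equiv> wv g \<phi> (xpart z) (axis j 1)"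
  shows "thv g \<phi> (z + t *\<^sub>R axis (Inr j) 1) = thv g \<phi> z + t *\<^sub>R vb (B *v w + N *v w') w' + t^2 *\<^sub>R vb (B *v w') 0"
  unfolding thv_def line_Inr Nm_lin wv_lin N_def[symmetric] B_def[symmetric] w_def[symmetric] w'_def[symmetric]
  by (simp add: vec_eq_iff matrix_vector_right_distrib matrix_vector_mult_scaleR scaleR_mv matrix_vector_mult_add_rdistrib
      power2_eq_square algebra_simps, intro allI, rename_tac a, case_tac a, simp_all add: algebra_simps)

lemma pd_thv_Inr:
  fixes g \<phi> :: "real^'n \<Rightarrow> real^'n^'n" and z :: "real^('n+'n)" and j :: 'n
  defines "N \<equiv> Nm g (xpart z) (upart z)" and "B \<equiv> Nm g (xpart z) (axis j 1)"
    and "w \<equiv> wv g \<phi> (xpart z) (upart z)" and "w' \<equiv> wv g \<phi> (xpart z) (axis j 1)"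
  shows "pd (\<lambda>w. thv g \<phi> w $ l) (Inr j) z = vb (B *v w + N *v w') w' $ l"
  by (rule quad_pd, simp add: thv_Inr N_def B_def w_def w'_def)

definition mdl :: "(real \<Rightarrow> real^'n^'m) \<Rightarrow> bool" where
  "mdl F \<longleftrightarrow> (\<forall>i j. (\<lambda>t. F t $ i $ j) differentiable (at 0))"
definition vdl :: "(real \<Rightarrow> real^'n) \<Rightarrow> bool" where
  "vdl F \<longleftrightarrow> (\<forall>i. (\<lambda>t. F t $ i) differentiable (at 0))"

lemma differentiable_prod0:
  fixes f :: "'a \<Rightarrow> real \<Rightarrow> real"
  assumes "finite S" "\<And>i. i \<in> S \<Longrightarrow> f i differentiable (at x)"
  shows "(\<lambda>t. \<Prod>i\<in>S. f i t) differentiable (at x)"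
  using assms by (induction S rule: finite_induct) auto

lemma mdl_mult: "mdl A \<Longrightarrow> mdl B \<Longrightarrow> mdl (\<lambda>t. A t ** B t)"
  unfolding mdl_def matrix_matrix_mult_def by (auto intro!: differentiable_sum)
lemma mdl_add: "mdl A \<Longrightarrow> mdl B \<Longrightarrow> mdl (\<lambda>t. A t + B t)"
  unfolding mdl_def by simp
lemma mdl_const: "mdl (\<lambda>t. A)"
  unfolding mdl_def by simp
lemma mdl_transpose: "mdl A \<Longrightarrow> mdl (\<lambda>t. transpose (A t))"
  unfolding mdl_def transpose_def by simp
lemma vdl_mv: "mdl A \<Longrightarrow> vdl v \<Longrightarrow> vdl (\<lambda>t. A t *v v t)"
  unfolding mdl_def vdl_def matrix_vector_mult_def by (auto intro!: differentiable_sum)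
lemma vdl_const: "vdl (\<lambda>t. v)"
  unfolding vdl_def by simp
lemma mdl_blk: "mdl A \<Longrightarrow> mdl B \<Longrightarrow> mdl C \<Longrightarrow> mdl D \<Longrightarrow> mdl (\<lambda>t. blk (A t) (B t) (C t) (D t))"
  unfolding mdl_def by (intro allI, rename_tac a b, case_tac a; case_tac b; simp)
lemma vdl_vb: "vdl a \<Longrightarrow> vdl b \<Longrightarrow> vdl (\<lambda>t. vb (a t) (b t))"
  unfolding vdl_def by (intro allI, rename_tac i, case_tac i; simp)

lemma det_diff: "mdl A \<Longrightarrow> (\<lambda>t. det (A t)) differentiable (at 0)"
  unfolding det_def mdl_def
  by (intro differentiable_sum differentiable_mult differentiable_prod0 ballI)
     (auto simp: finite_permutations)

lemma inv_cramer:
  fixes A :: "real^'n^'n"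
  assumes "invertible A"
  shows "matrix_inv A $ k $ l = det (\<chi> i j. if j = k then axis l 1 $ i else A$i$j) / det A"
proof -
  have d: "det A \<noteq> 0" using assms invertible_det_nz by blast
  have "A *v (matrix_inv A *v axis l 1) = axis l 1"
    using matrix_inv_props(1)[OF assms] by (simp add: matrix_vector_mul_assoc)
  then have "matrix_inv A *v axis l 1 = (\<chi> k. det (\<chi> i j. if j = k then axis l 1 $ i else A$i$j) / det A)"
    using cramer[OF d] by blast
  then have "(matrix_inv A *v axis l 1) $ k = det (\<chi> i j. if j = k then axis l 1 $ i else A$i$j) / det A"
    by simp
  moreover have "(matrix_inv A *v axis l 1) $ k = matrix_inv A $ k $ l"
    by (simp add: matrix_vector_mult_def axis_def if_distrib cong: if_cong)
  ultimately show ?thesis by simp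
qed

lemma inv_diff:
  fixes A :: "real \<Rightarrow> real^'n^'n"
  assumes "mdl A" "0 < e" "\<And>t. \<bar>t\<bar> < e \<Longrightarrow> invertible (A t)"
  shows "mdl (\<lambda>t. matrix_inv (A t))"
  unfolding mdl_def
proof (intro allI)
  fix k l
  define R where "R t = det (\<chi> i j. if j = k then axis l 1 $ i else A t$i$j) / det (A t)" for t
  have "mdl (\<lambda>t. (\<chi> i j. if j = k then axis l 1 $ i else A t$i$j) :: real^'n^'n)"
    using assms(1) unfolding mdl_def by (auto intro!: allI, case_tac "j = k", auto)
  then have "R differentiable (at 0)"
    unfolding R_def using assms(1) assms(3)[of 0] assms(2)
    by (intro differentiable_divide det_diff) (auto simp: invertible_det_nz)
  then show "(\<lambda>t. matrix_inv (A t) $ k $ l) differentiable (at 0)"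
    apply (rule differentiable_transform_within[OF _ assms(2), where s=UNIV])
    using assms(3) by (auto simp: R_def inv_cramer)
qed

lemma posdef_invertible:
  fixes G :: "real^'n^'n"
  assumes "\<forall>v. v \<noteq> 0 \<longrightarrow> v \<bullet> (G *v v) > 0"
  shows "invertible G"
proof -
  have "\<forall>x. G *v x = 0 \<longrightarrow> x = 0" using assms by force
  then show ?thesis using matrix_left_invertible_ker invertible_left_inverse by blast
qed

lemma open_line:
  fixes x :: "real^'n"
  assumes "open U" "x \<in> U"
  obtains e where "e > 0" "\<And>t. \<bar>t\<bar> < e \<Longrightarrow> x + t *\<^sub>R axis p 1 \<in> U"
proof -
  obtain e where e: "e > 0" "ball x e \<subseteq> U" using assms open_contains_ball by blast
  have "x + t *\<^sub>R axis p 1 \<in> U" if "\<bar>t\<bar> < e" for t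
  proof -
    have "dist x (x + t *\<^sub>R axis p 1) = \<bar>t\<bar>" by (simp add: dist_norm)
    then show ?thesis using e that by auto
  qed
  then show ?thesis using e that by blast
qed

lemma smooth_line:
  assumes "smooth_on U f" "x \<in> U"
  shows "(\<lambda>t. f (x + t *\<^sub>R axis p 1)) differentiable (at 0)"
    "(\<lambda>t. pd f i (x + t *\<^sub>R axis p 1)) differentiable (at 0)"
proof -
  have "(\<lambda>t. ipd f [] (x + t *\<^sub>R axis p 1)) differentiable (at 0)"
    "(\<lambda>t. ipd f [i] (x + t *\<^sub>R axis p 1)) differentiable (at 0)"
    using assms unfolding smooth_on_def by blast+
  then show "(\<lambda>t. f (x + t *\<^sub>R axis p 1)) differentiable (at 0)"
    "(\<lambda>t. pd f i (x + t *\<^sub>R axis p 1)) differentiable (at 0)" by simp_all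
qed

lemma g_mdl:
  assumes "\<forall>i j. smooth_on U (\<lambda>x. g x $ i $ j)" "x \<in> U"
  shows "mdl (\<lambda>t. g (x + t *\<^sub>R axis p 1))"
  unfolding mdl_def using smooth_line(1)[OF _ assms(2)] assms(1) by blast

lemma chr_line:
  fixes g :: "real^'n \<Rightarrow> real^'n^'n"
  assumes oU: "open U" and xU: "x \<in> U" and smg: "\<forall>i j. smooth_on U (\<lambda>x. g x $ i $ j)"
    and pos: "\<forall>x\<in>U. \<forall>v. v \<noteq> 0 \<longrightarrow> gform g x v v > 0"
  shows "(\<lambda>t. christoffel g (x + t *\<^sub>R axis p 1) k i j) differentiable (at 0)"
proof -
  obtain e where e: "e > 0" "\<And>t. \<bar>t\<bar> < e \<Longrightarrow> x + t *\<^sub>R axis p 1 \<in> U"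
    using open_line[OF oU xU] by blast
  have inv: "invertible (g (x + t *\<^sub>R axis p 1))" if "\<bar>t\<bar> < e" for t
    using pos e(2)[OF that] by (intro posdef_invertible) (auto simp: gform_def)
  have mi: "mdl (\<lambda>t. matrix_inv (g (x + t *\<^sub>R axis p 1)))"
    by (rule inv_diff[OF g_mdl[OF smg xU] e(1) inv])
  have pdl: "(\<lambda>t. pd (\<lambda>w. g w $ a $ b) c (x + t *\<^sub>R axis p 1)) differentiable (at 0)" for a b c
    using smooth_line(2)[OF _ xU] smg by blast
  show ?thesis
    unfolding christoffel_def using mi pdl unfolding mdl_def
    by (intro differentiable_mult differentiable_sum differentiable_const differentiable_add differentiable_diff ballI) auto
qed

lemma Nm_mdl:
  fixes g :: "real^'n \<Rightarrow> real^'n^'n"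
  assumes "open U" "x \<in> U" "\<forall>i j. smooth_on U (\<lambda>x. g x $ i $ j)"
    "\<forall>x\<in>U. \<forall>v. v \<noteq> 0 \<longrightarrow> gform g x v v > 0"
  shows "mdl (\<lambda>t. Nm g (x + t *\<^sub>R axis p 1) u)"
  unfolding mdl_def Nm_def using chr_line[OF assms]
  by (auto intro!: differentiable_sum differentiable_mult)

lemma sasaki_Inl_ld:
  fixes g \<phi> :: "real^'n \<Rightarrow> real^'n^'n"
  assumes "open U" "xpart z \<in> U" "\<forall>i j. smooth_on U (\<lambda>x. g x $ i $ j)"
    "\<forall>x\<in>U. \<forall>v. v \<noteq> 0 \<longrightarrow> gform g x v v > 0"
  shows "ld (\<lambda>w. sasaki_metric g \<phi> w $ a $ b) z (Inl p)"
proof -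
  have "mdl (\<lambda>t. sasaki_metric g \<phi> (z + t *\<^sub>R axis (Inl p) 1))"
    unfolding sasaki_blk line_Inl
    using Nm_mdl[OF assms, of p "upart z"] g_mdl[OF assms(3,2), of p]
    by (intro mdl_blk mdl_add mdl_mult mdl_transpose) auto
  then show ?thesis unfolding mdl_def ld_def by blast
qed

lemma fv_Inl_ld:
  fixes \<phi> :: "real^'n \<Rightarrow> real^'n^'n"
  assumes "xpart z \<in> U" "\<forall>i j. smooth_on U (\<lambda>x. \<phi> x $ i $ j)"
  shows "ld (\<lambda>w. fv \<phi> w $ l) z (Inl p)"
proof -
  have "vdl (\<lambda>t. fv \<phi> (z + t *\<^sub>R axis (Inl p) 1))"
    unfolding fv_def line_Inl
    using g_mdl[OF assms(2,1), of p]
    by (intro vdl_vb vdl_mv vdl_const) auto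
  then show ?thesis unfolding vdl_def ld_def by blast
qed

lemma line_DERIV:
  assumes "smooth_on U f" "x \<in> U"
  shows "DERIV (\<lambda>t. f (x + t *\<^sub>R axis p 1)) 0 :> pd f p x"
  using smooth_line(1)[OF assms, of p] unfolding pd_def
  by (simp add: DERIV_deriv_iff_real_differentiable)

lemma pd_thv_Inl:
  fixes g \<phi> :: "real^'n \<Rightarrow> real^'n^'n"
  assumes xU: "xpart z \<in> U" and smg: "\<forall>i j. smooth_on U (\<lambda>x. g x $ i $ j)"
    and smp: "\<forall>i j. smooth_on U (\<lambda>x. \<phi> x $ i $ j)"
  shows "pd (\<lambda>w. thv g \<phi> w $ Inr j) (Inl p) z =
     (\<Sum>k\<in>UNIV. pd (\<lambda>y. g y $ j $ k) p (xpart z) * (\<phi> (xpart z) *v upart z) $ k)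
     + (\<Sum>k\<in>UNIV. g (xpart z) $ j $ k * (\<Sum>m\<in>UNIV. pd (\<lambda>y. \<phi> y $ k $ m) p (xpart z) * upart z $ m))"
proof -
  define x where "x = xpart z"
  define u where "u = upart z"
  have e: "thv g \<phi> (z + t *\<^sub>R axis (Inl p) 1) $ Inr j
     = (\<Sum>k\<in>UNIV. g (x + t *\<^sub>R axis p 1) $ j $ k * (\<Sum>m\<in>UNIV. \<phi> (x + t *\<^sub>R axis p 1) $ k $ m * u $ m))" for t
    unfolding thv_def line_Inl x_def u_def by (simp add: wv_def matrix_vector_mult_def)
  have Dg: "DERIV (\<lambda>t. g (x + t *\<^sub>R axis p 1) $ j $ k) 0 :> pd (\<lambda>y. g y $ j $ k) p x" for k
    using line_DERIV[OF _ xU[folded x_def]] smg by blast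
  have Dp: "DERIV (\<lambda>t. \<phi> (x + t *\<^sub>R axis p 1) $ k $ m) 0 :> pd (\<lambda>y. \<phi> y $ k $ m) p x" for k m
    using line_DERIV[OF _ xU[folded x_def]] smp by blast
  have "DERIV (\<lambda>t. thv g \<phi> (z + t *\<^sub>R axis (Inl p) 1) $ Inr j) 0 :>
     (\<Sum>k\<in>UNIV. pd (\<lambda>y. g y $ j $ k) p x * (\<Sum>m\<in>UNIV. \<phi> x $ k $ m * u $ m)
        + (\<Sum>m\<in>UNIV. pd (\<lambda>y. \<phi> y $ k $ m) p x * u $ m) * g x $ j $ k)"
    unfolding e
  proof (rule DERIV_sum)
    fix k
    have Ds: "DERIV (\<lambda>t. \<Sum>m\<in>UNIV. \<phi> (x + t *\<^sub>R axis p 1) $ k $ m * u $ m) 0 :> (\<Sum>m\<in>UNIV. pd (\<lambda>y. \<phi> y $ k $ m) p x * u $ m)"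
      by (rule DERIV_sum) (rule DERIV_cmult_right[OF Dp])
    show "DERIV (\<lambda>t. g (x + t *\<^sub>R axis p 1) $ j $ k * (\<Sum>m\<in>UNIV. \<phi> (x + t *\<^sub>R axis p 1) $ k $ m * u $ m)) 0 :>
      pd (\<lambda>y. g y $ j $ k) p x * (\<Sum>m\<in>UNIV. \<phi> x $ k $ m * u $ m) + (\<Sum>m\<in>UNIV. pd (\<lambda>y. \<phi> y $ k $ m) p x * u $ m) * g x $ j $ k"
      using DERIV_mult[OF Dg Ds] by simp
  qed
  then show ?thesis unfolding x_def[symmetric] u_def[symmetric]
    by (subst pd_eqI, assumption) (simp add: matrix_vector_mult_def sum.distrib algebra_simps)
qed

lemma pd_sym_g:
  assumes oU: "open U" and xU: "x \<in> U" and smg: "\<forall>i j. smooth_on U (\<lambda>x. g x $ i $ j)"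
    and symg: "\<forall>x\<in>U. transpose (g x) = (g x :: real^'n^'n)"
  shows "pd (\<lambda>y. g y $ b $ c) a x = pd (\<lambda>y. g y $ c $ b) a x"
proof -
  obtain e where e: "e > 0" "\<And>t. \<bar>t\<bar> < e \<Longrightarrow> x + t *\<^sub>R axis a 1 \<in> U"
    using open_line[OF oU xU] by blast
  have D1: "DERIV (\<lambda>t. g (x + t *\<^sub>R axis a 1) $ b $ c) 0 :> pd (\<lambda>y. g y $ b $ c) a x"
    using line_DERIV[OF _ xU] smg by blast
  have D2: "DERIV (\<lambda>t. g (x + t *\<^sub>R axis a 1) $ c $ b) 0 :> pd (\<lambda>y. g y $ c $ b) a x"
    using line_DERIV[OF _ xU] smg by blast
  have ev: "eventually (\<lambda>t. g (x + t *\<^sub>R axis a 1) $ b $ c = g (x + t *\<^sub>R axis a 1) $ c $ b) (nhds 0)"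
    unfolding eventually_nhds_metric
  proof (intro exI[of _ e] conjI allI impI)
    fix t :: real assume "dist t 0 < e"
    then have "x + t *\<^sub>R axis a 1 \<in> U" using e(2) by (simp add: dist_real_def)
    then have "transpose (g (x + t *\<^sub>R axis a 1)) = g (x + t *\<^sub>R axis a 1)" using symg by blast
    then show "g (x + t *\<^sub>R axis a 1) $ b $ c = g (x + t *\<^sub>R axis a 1) $ c $ b"
      by (metis transpose_def vec_lambda_beta)
  qed (use e in simp)
  have "DERIV (\<lambda>t. g (x + t *\<^sub>R axis a 1) $ c $ b) 0 :> pd (\<lambda>y. g y $ b $ c) a x"
    using DERIV_cong_ev[OF refl ev refl] D1 by blast
  then show ?thesis using D2 DERIV_unique by blast
qed

lemma inv_contract:
  fixes A B :: "real^'n^'n"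
  assumes "A ** B = mat 1"
  shows "(\<Sum>l\<in>UNIV. A$j$l * (\<Sum>m\<in>UNIV. B$l$m * F m)) = F j"
proof -
  have "(\<Sum>l\<in>UNIV. A$j$l * (\<Sum>m\<in>UNIV. B$l$m * F m)) = (\<Sum>m\<in>UNIV. (A ** B)$j$m * F m)"
    unfolding matrix_matrix_mult_def
    by (simp add: sum_distrib_left sum_distrib_right mult.assoc, rule sum.swap)
  also have "\<dots> = (\<Sum>m\<in>UNIV. if m = j then F m else 0)"
    unfolding assms mat_def by (rule sum.cong) auto
  also have "\<dots> = F j" by simp
  finally show ?thesis .
qed

lemma metric_compat:
  fixes g :: "real^'n \<Rightarrow> real^'n^'n"
  assumes oU: "open U" and xU: "x \<in> U" and smg: "\<forall>i j. smooth_on U (\<lambda>x. g x $ i $ j)"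
    and symg: "\<forall>x\<in>U. transpose (g x) = g x"
    and ginv: "g x ** matrix_inv (g x) = mat 1"
  shows "pd (\<lambda>y. g y $ j $ k) p x = (\<Sum>l\<in>UNIV. g x $ j $ l * christoffel g x l p k) + (\<Sum>l\<in>UNIV. g x $ k $ l * christoffel g x l p j)"
proof -
  define dg where "dg a b c = pd (\<lambda>y. g y $ b $ c) a x" for a b c
  have ds: "dg a b c = dg a c b" for a b c unfolding dg_def using pd_sym_g[OF oU xU smg symg] .
  have cf: "christoffel g x l p k = (\<Sum>m\<in>UNIV. matrix_inv (g x) $ l $ m * ((1/2) * (dg p k m + dg k p m - dg m p k)))" for l p k
    unfolding christoffel_def dg_def by (simp add: sum_distrib_left algebra_simps)
  have "(\<Sum>l\<in>UNIV. g x $ j $ l * christoffel g x l p k) = (1/2) * (dg p k j + dg k p j - dg j p k)"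
    unfolding cf by (rule inv_contract[OF ginv, where F="\<lambda>m. (1/2) * (dg p k m + dg k p m - dg m p k)"])
  moreover have "(\<Sum>l\<in>UNIV. g x $ k $ l * christoffel g x l p j) = (1/2) * (dg p j k + dg j p k - dg k p j)"
    unfolding cf by (rule inv_contract[OF ginv, where F="\<lambda>m. (1/2) * (dg p j m + dg j p m - dg m p j)"])
  ultimately show ?thesis using ds[of p k j] ds[of k p j] ds[of j p k] unfolding dg_def[symmetric]
    by (simp add: algebra_simps)
qed

lemma E_alg:
  fixes G P \<Gamma> dg dp :: "real^'n^'n"
  assumes "dg = G ** \<Gamma> + transpose \<Gamma> ** G" "dp = P ** \<Gamma> - \<Gamma> ** P"
  shows "dg *v (P *v u) + G *v (dp *v u) = transpose \<Gamma> *v (G *v (P *v u)) + (G ** P) *v (\<Gamma> *v u)"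
  unfolding assms
  by (simp add: matrix_vector_mult_add_rdistrib matrix_vector_mult_diff_rdistrib matrix_vector_right_distrib
      matrix_vector_mul_assoc matrix_vector_mult_diff_distrib matrix_mul_assoc matrix_add_rdistrib)

lemma A_sym:
  fixes g \<phi> :: "real^'n \<Rightarrow> real^'n^'n"
  assumes "transpose (g x) = g x" "\<forall>v w. gform g x (\<phi> x *v v) w = gform g x v (\<phi> x *v w)"
  shows "transpose (g x ** \<phi> x) = g x ** \<phi> x"
proof -
  have gs: "g x $ a $ b = g x $ b $ a" for a b using assms(1) by (metis transpose_def vec_lambda_beta)
  have "(g x ** \<phi> x) $ i $ j = (g x ** \<phi> x) $ j $ i" for i j
  proof -
    have "gform g x (\<phi> x *v axis j 1) (axis i 1) = gform g x (axis j 1) (\<phi> x *v axis i 1)" using assms(2) by blast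
    moreover have "gform g x (\<phi> x *v axis j 1) (axis i 1) = (g x ** \<phi> x) $ i $ j"
      unfolding gform_def inner_vec_def matrix_vector_mult_def matrix_matrix_mult_def
      by (simp add: axis_def if_distrib if_distribR sum.delta' gs mult.commute cong: if_cong)
    moreover have "gform g x (axis j 1) (\<phi> x *v axis i 1) = (g x ** \<phi> x) $ j $ i"
      unfolding gform_def inner_vec_def matrix_vector_mult_def matrix_matrix_mult_def
      by (simp add: axis_def if_distrib if_distribR sum.delta' cong: if_cong)
    ultimately show ?thesis by simp
  qed
  then show ?thesis by (simp add: vec_eq_iff transpose_def)
qed

lemma sum_axis: "(\<Sum>i\<in>UNIV. axis j (1::real) $ i * c i) = c j"
proof -
  have "(\<Sum>i\<in>UNIV. axis j (1::real) $ i * c i) = (\<Sum>i\<in>UNIV. if i = j then c i else 0)"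
    by (rule sum.cong) (auto simp: axis_def)
  then show ?thesis by simp
qed

lemma sum_axis': "(\<Sum>i\<in>UNIV. c i * axis j (1::real) $ i) = c j"
  using sum_axis[of j c] by (simp add: mult.commute)

lemma E_Inl:
  fixes g \<phi> :: "real^'n \<Rightarrow> real^'n^'n" and z :: "real^('n+'n)"
  assumes oU: "open U" and xU: "xpart z \<in> U" and smg: "\<forall>i j. smooth_on U (\<lambda>x. g x $ i $ j)"
    and smp: "\<forall>i j. smooth_on U (\<lambda>x. \<phi> x $ i $ j)"
    and symg: "\<forall>x\<in>U. transpose (g x) = g x"
    and ginv: "g (xpart z) ** matrix_inv (g (xpart z)) = mat 1"
    and sa: "\<forall>v w. gform g (xpart z) (\<phi> (xpart z) *v v) w = gform g (xpart z) v (\<phi> (xpart z) *v w)"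
    and np: "\<forall>a i j. nabla_phi g \<phi> (xpart z) a i j = 0"
  shows "pd (\<lambda>w. thv g \<phi> w $ Inl q) (Inr j) z = pd (\<lambda>w. thv g \<phi> w $ Inr j) (Inl q) z"
proof -
  define x where "x = xpart z"
  define u where "u = upart z"
  define G where "G = g x"
  define P where "P = \<phi> x"
  define \<Gamma> where "\<Gamma> = (\<chi> l j. christoffel g x l q j)"
  define dg where "dg = (\<chi> j k. pd (\<lambda>y. g y $ j $ k) q x)"
  define dp where "dp = (\<chi> k m. pd (\<lambda>y. \<phi> y $ k $ m) q x)"
  have xU': "x \<in> U" using xU x_def by simp
  have Gs: "transpose G = G" using symg xU' G_def by simp
  have gs: "G $ a $ b = G $ b $ a" for a b using Gs by (metis transpose_def vec_lambda_beta)
  have As: "transpose (G ** P) = G ** P" unfolding G_def P_def x_def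
    using A_sym[of g "xpart z" \<phi>, OF _ sa] symg xU by simp
  have as: "(G ** P) $ a $ b = (G ** P) $ b $ a" for a b using As by (metis transpose_def vec_lambda_beta)
  have hdg: "dg = G ** \<Gamma> + transpose \<Gamma> ** G"
  proof -
    have "dg $ j $ k = (G ** \<Gamma> + transpose \<Gamma> ** G) $ j $ k" for j k
      unfolding dg_def using metric_compat[OF oU xU' smg symg ginv[folded x_def], of j k q]
      by (simp add: matrix_matrix_mult_def \<Gamma>_def G_def transpose_def gs[unfolded G_def] mult.commute)
    then show ?thesis by (simp add: vec_eq_iff)
  qed
  have hdp: "dp = P ** \<Gamma> - \<Gamma> ** P"
  proof -
    have "dp $ k $ m = (P ** \<Gamma> - \<Gamma> ** P) $ k $ m" for k m
      using np[rule_format, of q k m] unfolding dp_def nabla_phi_def x_def[symmetric]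
      by (simp add: matrix_matrix_mult_def \<Gamma>_def P_def algebra_simps)
    then show ?thesis by (simp add: vec_eq_iff)
  qed
  have rhs: "pd (\<lambda>w. thv g \<phi> w $ Inr j) (Inl q) z = (dg *v (P *v u) + G *v (dp *v u)) $ j"
    unfolding pd_thv_Inl[OF xU smg smp] x_def[symmetric] u_def[symmetric]
    by (simp add: dg_def dp_def G_def P_def matrix_vector_mult_def)
  have lhs: "pd (\<lambda>w. thv g \<phi> w $ Inl q) (Inr j) z = (transpose \<Gamma> *v (G *v (P *v u)) + (G ** P) *v (\<Gamma> *v u)) $ j"
  proof -
    have B: "Nm g x (axis j 1) $ q $ k = christoffel g x k q j" for k
      by (simp add: Nm_def sum_axis)
    have N: "Nm g x u $ q $ k = (\<Gamma> *v u) $ k" for k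
      by (simp add: Nm_def \<Gamma>_def matrix_vector_mult_def mult.commute)
    have w': "wv g \<phi> x (axis j 1) $ k = (G ** P) $ j $ k" for k
      using as[of k j] by (simp add: wv_def G_def P_def matrix_vector_mult_def matrix_matrix_mult_def sum_axis sum_axis')
    have w: "wv g \<phi> x u = G *v (P *v u)" by (simp add: wv_def G_def P_def)
    have s1: "(Nm g x (axis j 1) *v (G *v (P *v u))) $ q = (transpose \<Gamma> *v (G *v (P *v u))) $ j"
      by (simp add: matrix_vector_mult_def B \<Gamma>_def transpose_def)
    have s2: "(Nm g x u *v wv g \<phi> x (axis j 1)) $ q = ((G ** P) *v (\<Gamma> *v u)) $ j"
      unfolding matrix_vector_mult_def[of "Nm g x u"] matrix_vector_mult_def[of "G ** P"]
      by (simp add: N w' mult.commute)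
    show ?thesis
      unfolding pd_thv_Inr x_def[symmetric] u_def[symmetric] w
      by (simp add: s1 s2[unfolded w])
  qed
  show ?thesis unfolding lhs rhs E_alg[OF hdg hdp] ..
qed

lemma E_Inr:
  fixes g \<phi> :: "real^'n \<Rightarrow> real^'n^'n" and z :: "real^('n+'n)"
  assumes As: "transpose (g (xpart z) ** \<phi> (xpart z)) = g (xpart z) ** \<phi> (xpart z)"
  shows "pd (\<lambda>w. thv g \<phi> w $ Inr m) (Inr j) z = pd (\<lambda>w. thv g \<phi> w $ Inr j) (Inr m) z"
proof -
  have as: "(g (xpart z) ** \<phi> (xpart z)) $ a $ b = (g (xpart z) ** \<phi> (xpart z)) $ b $ a" for a b
    using As by (metis transpose_def vec_lambda_beta)
  show ?thesis unfolding pd_thv_Inr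
    using as[of m j] by (simp add: wv_def matrix_vector_mult_def matrix_matrix_mult_def sum_axis sum_axis')
qed

lemma inner_vb: "vb a b \<bullet> vb c d = a \<bullet> c + b \<bullet> (d :: real^'n)"
  by (simp add: inner_vec_def sum_UNIV_Plus)

lemma pd_fv_Inl_zero: "pd (\<lambda>w. fv \<phi> w $ Inl i) a z = 0"
  by (rule pd_eqI) (simp add: fv_def)

lemma transpose_minus: "transpose (A - B) = transpose A - transpose (B::real^'n^'m)"
  by (simp add: vec_eq_iff transpose_def)

lemma point_trace:
  fixes g \<phi> :: "real^'n \<Rightarrow> real^'n^'n" and z :: "real^('n+'n)" and \<delta> :: real
  assumes oU: "open U" and xU: "xpart z \<in> U" and smg: "\<forall>i j. smooth_on U (\<lambda>x. g x $ i $ j)"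
    and smp: "\<forall>i j. smooth_on U (\<lambda>x. \<phi> x $ i $ j)"
    and symg: "\<forall>x\<in>U. transpose (g x) = g x"
    and pos: "\<forall>x\<in>U. \<forall>v. v \<noteq> 0 \<longrightarrow> gform g x v v > 0"
    and sa: "\<forall>v w. gform g (xpart z) (\<phi> (xpart z) *v v) w = gform g (xpart z) v (\<phi> (xpart z) *v w)"
    and np: "\<forall>a i j. nabla_phi g \<phi> (xpart z) a i j = 0"
  defines "\<psi> \<equiv> \<phi> (xpart z) *v upart z"
  defines "w \<equiv> g (xpart z) *v \<psi>"
  defines "c \<equiv> \<delta>^2 / (1 + \<delta>^2 * (w \<bullet> \<psi>))"
  shows "(\<Sum>a\<in>UNIV. \<Sum>b\<in>UNIV. matrix_inv (berger_metric g \<phi> \<delta> z)$a$b *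
            beta_comp (berger_metric g \<phi> \<delta>) (sasaki_metric g \<phi>) z (Inr m) a b)
     = c * \<psi>$m * (c * (\<Sum>j\<in>UNIV. \<psi>$j * (\<Sum>k\<in>UNIV. w$k * \<phi> (xpart z) $k$j)) - (\<Sum>j\<in>UNIV. \<phi> (xpart z) $j$j))"
proof -
  define x where "x = xpart z"
  define u where "u = upart z"
  define G where "G = g x"
  define gi where "gi = matrix_inv G"
  define N where "N = Nm g x u"
  define s where "s = w \<bullet> \<psi>"
  define e where "e = 1 / (1 + \<delta>^2 * s)"
  define G1 where "G1 = berger_metric g \<phi> \<delta>"
  define G2 where "G2 = sasaki_metric g \<phi>"
  define \<zeta> where "\<zeta> = fv \<phi> z"
  define th where "th = thv g \<phi> z"
  have xU': "x \<in> U" using xU x_def by simp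
  have Gs: "transpose G = G" using symg xU' G_def by simp
  have Ginv: "invertible G" unfolding G_def using pos xU' by (intro posdef_invertible) (auto simp: gform_def)
  have Ggi: "G ** gi = mat 1" and giG: "gi ** G = mat 1" using matrix_inv_props[OF Ginv] gi_def by auto
  have gis: "transpose gi = gi"
  proof -
    have "G ** transpose gi = transpose (gi ** G)" by (simp add: matrix_transpose_mul Gs)
    then have h: "G ** transpose gi = mat 1" using giG transpose_mat by metis
    have "matrix_inv G = transpose gi" by (rule matrix_inv_eqI[OF h]) (use h matrix_left_right_inverse in blast)
    then show ?thesis by (simp add: gi_def)
  qed
  have wdef: "w = G *v \<psi>" by (simp add: w_def G_def x_def)
  have s0: "s \<ge> 0"
  proof (cases "\<psi> = 0")
    case True then show ?thesis by (simp add: s_def)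
  next
    case False
    then have "gform g x \<psi> \<psi> > 0" using pos xU' by blast
    then show ?thesis by (simp add: s_def wdef G_def gform_def inner_commute)
  qed
  have nz: "1 + \<delta>^2 * s > 0" using s0 by (simp add: add_pos_nonneg)
  have cdef: "c = \<delta>^2 / (1 + \<delta>^2 * s)" by (simp add: c_def s_def)
  define M2 where "M2 = blk gi (-(gi ** N)) (-(transpose N ** gi)) (gi + transpose N ** gi ** N)"
  have G2z: "G2 z = blk (G + N ** G ** transpose N) (N ** G) (G ** transpose N) G"
    unfolding G2_def sasaki_blk G_def N_def x_def u_def ..
  have G2M2: "G2 z ** M2 = mat 1" unfolding G2z M2_def by (rule G2_inv_right[OF Ggi])
  have M2G2: "M2 ** G2 z = mat 1" using G2M2 matrix_left_right_inverse by blast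
  have M2inv: "matrix_inv (G2 z) = M2" by (rule matrix_inv_eqI[OF G2M2 M2G2])
  have M2s: "transpose M2 = M2" unfolding M2_def transpose_blk
    by (simp add: transpose_neg transpose_add matrix_transpose_mul gis matrix_mul_assoc)
  have G2f: "G2 z *v \<zeta> = th" unfolding G2_def \<zeta>_def th_def by (rule sasaki_f)
  have thz: "th \<bullet> \<zeta> = s"
    by (simp add: th_def \<zeta>_def thv_def fv_def inner_vb s_def w_def wv_def \<psi>_def x_def u_def)
  have G1eq: "G1 z = G2 z + \<delta>^2 *\<^sub>R outer th th" unfolding G1_def G2_def th_def by (rule berger_sasaki)
  define M1 where "M1 = M2 - c *\<^sub>R outer \<zeta> \<zeta>"
  have G1M1: "G1 z ** M1 = mat 1" unfolding G1eq M1_def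
    by (rule SM_right[OF G2M2 M2G2 G2f M2s]) (use nz thz cdef in auto)
  have M1G1: "M1 ** G1 z = mat 1" using G1M1 matrix_left_right_inverse by blast
  have M1inv: "matrix_inv (G1 z) = M1" by (rule matrix_inv_eqI[OF G1M1 M1G1])
  have M1s: "transpose M1 = M1" unfolding M1_def by (simp add: transpose_minus transpose_scaleR M2s transpose_outer)
  have M2th: "M2 *v th = \<zeta>" using G2f M2G2 by (metis matrix_vector_mul_assoc matrix_vector_mul_lid)
  have M1th: "M1 *v th = e *\<^sub>R \<zeta>"
  proof -
    have "M1 *v th = \<zeta> - (c * s) *\<^sub>R \<zeta>"
      unfolding M1_def by (simp add: matrix_vector_mult_diff_rdistrib scaleR_mv mv_outer M2th thz[unfolded inner_commute[of th]])
    also have "\<dots> = (1 - c * s) *\<^sub>R \<zeta>" by (simp add: scaleR_diff_left)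
    also have "1 - c * s = e" using nz unfolding e_def cdef by (simp add: field_simps)
    finally show ?thesis .
  qed
  have ce: "c = \<delta>^2 * e" unfolding cdef e_def by simp
  have thfun: "(\<lambda>w. G2 w *v fv \<phi> w) = thv g \<phi>" by (rule ext) (simp add: G2_def sasaki_f)
  have G1all: "\<And>w. G1 w = G2 w + \<delta>^2 *\<^sub>R outer (G2 w *v fv \<phi> w) (G2 w *v fv \<phi> w)"
    by (simp add: G1_def G2_def sasaki_f berger_sasaki)
  have ldG: "ld (\<lambda>w. G2 w $ b $ l) z a" for a b l
  proof (cases a)
    case (Inl p) then show ?thesis unfolding G2_def using sasaki_Inl_ld[OF oU xU smg pos] by blast
  next
    case (Inr j) then show ?thesis unfolding G2_def using pd_sasaki_Inr(2) by blast
  qed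
  have ldf: "ld (\<lambda>w. fv \<phi> w $ l) z a" for a l
  proof (cases a)
    case (Inl p) then show ?thesis using fv_Inl_ld[OF xU smp] by blast
  next
    case (Inr j) then show ?thesis using pd_fv_Inr(2) by blast
  qed
  have M1sym: "transpose (matrix_inv (G1 z)) = matrix_inv (G1 z)" using M1s M1inv by simp
  have M2eq: "matrix_inv (G2 z) = matrix_inv (G1 z) + c *\<^sub>R outer (fv \<phi> z) (fv \<phi> z)"
    unfolding M1inv M2inv M1_def \<zeta>_def by simp
  have M1th': "matrix_inv (G1 z) *v (G2 z *v fv \<phi> z) = e *\<^sub>R fv \<phi> z"
    using M1th unfolding M1inv G2f[unfolded \<zeta>_def] th_def \<zeta>_def .
  note gt = generic_trace[where ?G1.0=G1 and ?G2.0=G2 and f="fv \<phi>" and d="\<delta>^2" and z=z and c=c and e=e and k="Inr m", OF G1all ldG ldf M1sym M2eq M1th' ce]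
  have EZ: "(\<Sum>a\<in>UNIV. fv \<phi> z $ a * (pd (\<lambda>w. thv g \<phi> w $ l) a z - pd (\<lambda>w. thv g \<phi> w $ a) l z)) = 0" for l
  proof -
    have ginv': "g (xpart z) ** matrix_inv (g (xpart z)) = mat 1" using Ggi by (simp add: G_def gi_def x_def)
    have As: "transpose (g (xpart z) ** \<phi> (xpart z)) = g (xpart z) ** \<phi> (xpart z)"
      using A_sym[of g "xpart z" \<phi>, OF _ sa] symg xU by simp
    have eq: "pd (\<lambda>w. thv g \<phi> w $ l) (Inr j) z - pd (\<lambda>w. thv g \<phi> w $ Inr j) l z = 0" for j
    proof (cases l)
      case (Inl q) then show ?thesis using E_Inl[OF oU xU smg smp symg ginv' sa np] by simp
    next
      case (Inr q) then show ?thesis using E_Inr[where g=g and \<phi>=\<phi> and z=z, OF As] by simp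
    qed
    have z1: "fv \<phi> z $ Inl i = 0" for i by (simp add: fv_def)
    show ?thesis unfolding sum_UNIV_Plus z1 eq by simp
  qed
  have XZ: "(\<Sum>a\<in>UNIV. \<Sum>b\<in>UNIV. matrix_inv (G1 z)$a$b * (\<Sum>l\<in>UNIV. fv \<phi> z$l * pd (\<lambda>w. G2 w$a$b) l z)) = 0"
  proof -
    define D where "D j = blk (Nm g x (axis j 1) ** G ** transpose N + N ** G ** transpose (Nm g x (axis j 1)))
        (Nm g x (axis j 1) ** G) (G ** transpose (Nm g x (axis j 1))) 0" for j
    have inner: "(\<Sum>l\<in>UNIV. fv \<phi> z$l * pd (\<lambda>w. G2 w$a$b) l z) = (\<Sum>j\<in>UNIV. \<psi>$j * D j $ a $ b)" for a b
    proof -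
      have "(\<Sum>l\<in>UNIV. fv \<phi> z$l * pd (\<lambda>w. G2 w$a$b) l z)
          = (\<Sum>i\<in>UNIV. fv \<phi> z$Inl i * pd (\<lambda>w. G2 w$a$b) (Inl i) z) + (\<Sum>j\<in>UNIV. fv \<phi> z$Inr j * pd (\<lambda>w. G2 w$a$b) (Inr j) z)"
        by (rule sum_UNIV_Plus)
      also have "(\<Sum>i\<in>UNIV. fv \<phi> z$Inl i * pd (\<lambda>w. G2 w$a$b) (Inl i) z) = 0" by (simp add: fv_def)
      also have "(\<Sum>j\<in>UNIV. fv \<phi> z$Inr j * pd (\<lambda>w. G2 w$a$b) (Inr j) z) = (\<Sum>j\<in>UNIV. \<psi>$j * D j $ a $ b)"
        apply (rule sum.cong[OF refl])
        by (simp only: G2_def pd_sasaki_Inr(1) D_def fv_def vb_nth \<psi>_def x_def u_def G_def N_def)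
      finally show ?thesis by simp
    qed
    have Dz: "(\<Sum>a\<in>UNIV. \<Sum>b\<in>UNIV. M1$a$b * D j $ a $ b) = 0" for j
      unfolding M1_def M2_def D_def \<zeta>_def fv_def \<psi>_def[symmetric] x_def[symmetric] u_def[symmetric]
      by (rule trace_D_zero)
    have "(\<Sum>a\<in>UNIV. \<Sum>b\<in>UNIV. M1$a$b * (\<Sum>j\<in>UNIV. \<psi>$j * D j $ a $ b))
        = (\<Sum>j\<in>UNIV. \<psi>$j * (\<Sum>a\<in>UNIV. \<Sum>b\<in>UNIV. M1$a$b * D j $ a $ b))"
    proof -
      have "(\<Sum>a\<in>UNIV. \<Sum>b\<in>UNIV. M1$a$b * (\<Sum>j\<in>UNIV. \<psi>$j * D j $ a $ b))
          = (\<Sum>a\<in>UNIV. \<Sum>b\<in>UNIV. \<Sum>j\<in>UNIV. \<psi>$j * (M1$a$b * D j $ a $ b))"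
        by (simp add: sum_distrib_left mult_ac)
      also have "\<dots> = (\<Sum>j\<in>UNIV. \<Sum>a\<in>UNIV. \<Sum>b\<in>UNIV. \<psi>$j * (M1$a$b * D j $ a $ b))"
        by (subst sum3_rot, subst sum3_rot, rule refl)
      finally show ?thesis by (simp add: sum_distrib_left)
    qed
    also have "\<dots> = 0" by (simp add: Dz)
    finally show ?thesis unfolding M1inv inner .
  qed
  have M1G2: "M1 ** G2 z = mat 1 - c *\<^sub>R outer \<zeta> th"
  proof -
    have "G2 z = G1 z - \<delta>^2 *\<^sub>R outer th th" using G1eq by simp
    then have "M1 ** G2 z = M1 ** G1 z - \<delta>^2 *\<^sub>R (M1 ** outer th th)"
      by (simp add: matrix_diff_ldistrib matrix_scalar_ac scalar_matrix_assoc)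
    also have "\<dots> = mat 1 - \<delta>^2 *\<^sub>R outer (e *\<^sub>R \<zeta>) th" unfolding M1G1 mult_outer M1th ..
    also have "\<dots> = mat 1 - c *\<^sub>R outer \<zeta> th" by (simp add: outer_scaleR_left ce)
    finally show ?thesis .
  qed
  have QZ: "(\<Sum>a\<in>UNIV. \<Sum>l\<in>UNIV. (matrix_inv (G1 z) ** G2 z)$a$l * pd (\<lambda>w. fv \<phi> w $ l) a z)
      = (\<Sum>j\<in>UNIV. \<phi> x $j$j) - c * (\<Sum>j\<in>UNIV. \<psi>$j * (\<Sum>k\<in>UNIV. w$k * \<phi> x $k$j))"
  proof -
    have Q2: "pd (\<lambda>w. fv \<phi> w $ Inr k) (Inr j) z = \<phi> x $ k $ j" for j k
      unfolding pd_fv_Inr(1) by (simp add: matrix_vector_mult_def sum_axis' x_def)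
    have zl: "\<zeta> $ Inl i = 0" for i by (simp add: \<zeta>_def fv_def)
    have zr: "\<zeta> $ Inr j = \<psi> $ j" for j by (simp add: \<zeta>_def fv_def \<psi>_def)
    have tr: "th $ Inr k = w $ k" for k by (simp add: th_def thv_def wv_def w_def \<psi>_def)
    have mI: "(mat 1 :: real^('n+'n)^('n+'n)) $ a $ b = (if a = b then 1 else 0)" for a b by (simp add: mat_def)
    have "(\<Sum>a\<in>UNIV. \<Sum>l\<in>UNIV. (M1 ** G2 z)$a$l * pd (\<lambda>w. fv \<phi> w $ l) a z)
      = (\<Sum>j\<in>UNIV. \<Sum>k\<in>UNIV. ((if j = k then 1 else 0) - c * (\<psi>$j * w$k)) * \<phi> x $ k $ j)"
      unfolding M1G2 sum_UNIV_Plus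
      by (simp add: pd_fv_Inl_zero zl zr tr mI Q2)
    also have "\<dots> = (\<Sum>j\<in>UNIV. \<phi> x $j$j) - c * (\<Sum>j\<in>UNIV. \<psi>$j * (\<Sum>k\<in>UNIV. w$k * \<phi> x $k$j))"
    proof -
      have "(\<Sum>k\<in>UNIV. ((if j = k then 1 else 0) - c * (\<psi>$j * w$k)) * \<phi> x $ k $ j)
          = \<phi> x $j$j - c * (\<psi>$j * (\<Sum>k\<in>UNIV. w$k * \<phi> x $k$j))" for j
      proof -
        have "(\<Sum>k\<in>UNIV. ((if j = k then 1 else 0) - c * (\<psi>$j * w$k)) * \<phi> x $ k $ j)
          = (\<Sum>k\<in>UNIV. (if k = j then \<phi> x $ k $ j else 0)) - (\<Sum>k\<in>UNIV. c * (\<psi>$j * (w$k * \<phi> x $ k $ j)))"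
          by (subst sum_subtractf[symmetric], rule sum.cong) (auto simp: algebra_simps)
        then show ?thesis by (simp add: sum_distrib_left)
      qed
      then show ?thesis by (simp add: sum_subtractf sum_distrib_left)
    qed
    finally show ?thesis unfolding M1inv .
  qed
  have thw: "\<And>w. G2 w *v fv \<phi> w = thv g \<phi> w" by (simp add: G2_def sasaki_f)
  have zm: "fv \<phi> z $ Inr m = \<psi> $ m" by (simp add: fv_def \<psi>_def)
  have "(\<Sum>a\<in>UNIV. \<Sum>b\<in>UNIV. matrix_inv (G1 z)$a$b * beta_comp G1 G2 z (Inr m) a b)
     = c * \<psi>$m * (c * (\<Sum>j\<in>UNIV. \<psi>$j * (\<Sum>k\<in>UNIV. w$k * \<phi> x $k$j)) - (\<Sum>j\<in>UNIV. \<phi> x $j$j))"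
    unfolding gt thw EZ XZ QZ zm by (simp add: algebra_simps)
  then show ?thesis unfolding G1_def G2_def x_def .
qed

lemma R_formula: "(\<Sum>j\<in>UNIV. \<psi>$j * (\<Sum>k\<in>UNIV. w$k * P $k$j)) = w \<bullet> (P *v (\<psi>::real^'n))"
  unfolding inner_vec_def matrix_vector_mult_def
  by (simp add: sum_distrib_left mult_ac, rule sum.swap)

lemma eigvec:
  fixes P :: "real^'n^'n"
  assumes "P ** P = mat 1"
  obtains u \<sigma> where "u \<noteq> 0" "P *v u = \<sigma> *\<^sub>R u" "\<sigma> = 1 \<or> \<sigma> = -1"
proof -
  obtain i :: 'n where True by blast
  define a where "a = (axis i 1 :: real^'n)"
  have a0: "a \<noteq> 0" by (simp add: a_def)
  have PP: "P *v (P *v v) = v" for v using assms by (simp add: matrix_vector_mul_assoc)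
  show ?thesis
  proof (cases "a + P *v a = 0")
    case True
    then have "P *v a = (-1) *\<^sub>R a" by (simp add: add_eq_0_iff)
    then show ?thesis using that a0 by blast
  next
    case False
    have "P *v (a + P *v a) = 1 *\<^sub>R (a + P *v a)"
      by (simp add: matrix_vector_right_distrib PP add.commute)
    then show ?thesis using that False by blast
  qed
qed

theorem mainTheorem8:
  fixes U :: "(real^'n) set" and g \<phi> :: "real^'n \<Rightarrow> real^'n^'n" and k :: nat and \<delta> :: real
  assumes "open U" and "U \<noteq> {}"
    and "CARD('n) = 2 * k" and "k \<ge> 1"
    and "\<forall>i j. smooth_on U (\<lambda>x. g x $ i $ j)"
    and "\<forall>i j. smooth_on U (\<lambda>x. \<phi> x $ i $ j)"
    and "\<forall>x\<in>U. transpose (g x) = g x"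
    and "\<forall>x\<in>U. \<forall>v. v \<noteq> 0 \<longrightarrow> gform g x v v > 0"
    and "\<forall>x\<in>U. \<phi> x ** \<phi> x = mat 1"
    and "\<forall>x\<in>U. dim {v. \<phi> x *v v = v} = k \<and> dim {v. \<phi> x *v v = - v} = k"
    and "\<forall>x\<in>U. \<forall>v w. gform g x (\<phi> x *v v) w = gform g x v (\<phi> x *v w)"
    and "\<forall>x\<in>U. \<forall>a i j. nabla_phi g \<phi> x a i j = 0"
    and "\<delta> \<noteq> 0"
  shows "\<not> totally_geodesic_id (TM_dom U) (berger_metric g \<phi> \<delta>) (sasaki_metric g \<phi>)
       \<and> \<not> harmonic_id (TM_dom U) (berger_metric g \<phi> \<delta>) (sasaki_metric g \<phi>)"
proof -
  note oU = assms(1) and smg = assms(5) and smp = assms(6) and symg = assms(7) and pos = assms(8)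
    and sa = assms(11) and np = assms(12) and d0 = assms(13)
  obtain x0 where x0: "x0 \<in> U" using assms(2) by blast
  define P where "P = \<phi> x0"
  define G where "G = g x0"
  have PP: "P ** P = mat 1" using assms(9) x0 P_def by simp
  obtain u0 \<sigma> where u0: "u0 \<noteq> 0" "P *v u0 = \<sigma> *\<^sub>R u0" "\<sigma> = 1 \<or> \<sigma> = -1"
    using eigvec[OF PP] by blast
  have s2: "\<sigma> * \<sigma> = 1" using u0(3) by auto
  have s2': "\<sigma> * (\<sigma> * y) = y" for y using u0(3) by auto
  obtain m where m: "u0 $ m \<noteq> 0" using u0(1) by (metis vec_eq_iff zero_index)
  define q0 where "q0 = u0 \<bullet> (G *v u0)"
  have q0: "q0 > 0" using pos x0 u0(1) by (simp add: q0_def G_def gform_def)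
  define T where "T = (\<Sum>j\<in>UNIV. P $j$j)"
  define tr where "tr t = (\<Sum>a\<in>UNIV. \<Sum>b\<in>UNIV. matrix_inv (berger_metric g \<phi> \<delta> (vb x0 (t *\<^sub>R u0)))$a$b *
            beta_comp (berger_metric g \<phi> \<delta>) (sasaki_metric g \<phi>) (vb x0 (t *\<^sub>R u0)) (Inr m) a b)" for t
  define h where "h t = \<delta>^2 * t^2 * q0 / (1 + \<delta>^2 * t^2 * q0)" for t :: real
  have trv: "tr t = (\<delta>^2 / (1 + \<delta>^2 * (t^2 * q0))) * (\<sigma> * t * u0$m) * (\<sigma> * h t - T)" for t
  proof -
    define z where "z = vb x0 (t *\<^sub>R u0)"
    have xz: "xpart z = x0" and uz: "upart z = t *\<^sub>R u0" by (simp_all add: z_def xpart_vb upart_vb)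
    have psi: "\<phi> (xpart z) *v upart z = (\<sigma> * t) *\<^sub>R u0"
      using u0(2) by (simp add: xz uz P_def[symmetric] matrix_vector_mult_scaleR)
    have w: "g (xpart z) *v (\<phi> (xpart z) *v upart z) = (\<sigma> * t) *\<^sub>R (G *v u0)"
      unfolding psi by (simp add: xz G_def[symmetric] matrix_vector_mult_scaleR)
    have wpsi: "(g (xpart z) *v (\<phi> (xpart z) *v upart z)) \<bullet> (\<phi> (xpart z) *v upart z) = t^2 * q0"
      unfolding w psi by (simp add: q0_def inner_commute power2_eq_square algebra_simps xz G_def s2')
    have Ppsi: "\<phi> (xpart z) *v (\<phi> (xpart z) *v upart z) = t *\<^sub>R u0"
      unfolding psi by (simp add: xz P_def[symmetric] matrix_vector_mult_scaleR u0(2) s2)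
    have R: "(\<Sum>j\<in>UNIV. (\<phi> (xpart z) *v upart z)$j * (\<Sum>k\<in>UNIV. (g (xpart z) *v (\<phi> (xpart z) *v upart z))$k * \<phi> (xpart z) $k$j))
        = \<sigma> * t^2 * q0"
      unfolding R_formula Ppsi w by (simp add: q0_def inner_commute power2_eq_square)
    have xzU: "xpart z \<in> U" using xz x0 by simp
    note pt = point_trace[OF oU xzU smg smp symg pos, of \<delta> m]
    have pt': "tr t = (\<delta>^2 / (1 + \<delta>^2 * (t^2 * q0))) * ((\<sigma> * t) * u0$m) *
         ((\<delta>^2 / (1 + \<delta>^2 * (t^2 * q0))) * (\<sigma> * t^2 * q0) - T)"
      using pt sa[rule_format, OF xzU] np[rule_format, OF xzU] unfolding tr_def z_def[symmetric] wpsi R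
      using psi unfolding xz by (simp add: T_def P_def)
    have "(\<delta>^2 / (1 + \<delta>^2 * (t^2 * q0))) * (\<sigma> * t^2 * q0) = \<sigma> * h t"
      unfolding h_def by (simp add: algebra_simps)
    then show ?thesis unfolding pt' by (simp add: algebra_simps)
  qed
  have hpos: "1 + \<delta>^2 * (t^2 * q0) > 0" for t using q0 by (simp add: add_pos_nonneg)
  have nh: "\<not> harmonic_id (TM_dom U) (berger_metric g \<phi> \<delta>) (sasaki_metric g \<phi>)"
  proof
    assume H: "harmonic_id (TM_dom U) (berger_metric g \<phi> \<delta>) (sasaki_metric g \<phi>)"
    have z: "tr t = 0" for t
    proof -
      have "vb x0 (t *\<^sub>R u0) \<in> TM_dom U" by (simp add: TM_dom_def xpart_vb x0)
      then show ?thesis using H unfolding harmonic_id_def tr_def by blast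
    qed
    have eq: "\<sigma> * h t = T" if "t \<noteq> 0" for t
    proof -
      have "(\<delta>^2 / (1 + \<delta>^2 * (t^2 * q0))) * (\<sigma> * t * u0$m) \<noteq> 0"
        using hpos[of t] d0 that m u0(3) by auto
      then show ?thesis using z[of t] trv[of t] by simp
    qed
    have "h 1 = h 2" using eq[of 1] eq[of 2] u0(3) by auto
    moreover have "h 1 \<noteq> h 2"
    proof -
      define p where "p = \<delta>^2 * q0"
      have p: "p > 0" using d0 q0 by (simp add: p_def)
      have "h 1 = p / (1 + p)" "h 2 = 4 * p / (1 + 4 * p)" by (simp_all add: h_def p_def algebra_simps)
      moreover have "p / (1 + p) \<noteq> 4 * p / (1 + 4 * p)" using p by (simp add: field_simps)
      ultimately show ?thesis by simp
    qed
    ultimately show False by simp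
  qed
  moreover have "\<not> totally_geodesic_id (TM_dom U) (berger_metric g \<phi> \<delta>) (sasaki_metric g \<phi>)"
  proof
    assume "totally_geodesic_id (TM_dom U) (berger_metric g \<phi> \<delta>) (sasaki_metric g \<phi>)"
    then have "harmonic_id (TM_dom U) (berger_metric g \<phi> \<delta>) (sasaki_metric g \<phi>)"
      unfolding totally_geodesic_id_def harmonic_id_def by simp
    with nh show False by simp
  qed
  ultimately show ?thesis by blast
qed

end
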